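(* Suppose Assumption I holds, i.e. there is $\alpha>0$ with $\limsup_{m\to\infty} m^{\alpha}\,\mathbb{E}T_m<\infty$. Then for any $T>0$, $\mathbb{P}$-a.s. $$\max_{1\le k\le 2^nT}N_{n,k}<4^{n/\alpha}n^{2/\alpha}$$ for all $n$ large enough.
   Context: Let $\Lambda$ be a finite measure on $[0,1]$, $\lambda_{b,k}=\int_{[0,1]}x^{k-2}(1-x)^{b-k}\Lambda(dx)$ for $2\le k\le b$. The $\Lambda$-coalescent $\Pi$ is the partition-valued Markov process on $\{1,2,\dots\}$ started from singletons in which, when there are $b$ blocks, each $k$-tuple of blocks merges at rate $\lambda_{b,k}$; $T_m=\inf\{t\ge0:\#\Pi(t)\le m\}$, $\inf\emptyset=\infty$. Lookdown construction on $(\Omega,\mathcal F,\mathbb P)$: particles at levels $i=1,2,\dots$ with locations in $\mathbb{R}^d$; single-birth events at rate $\Lambda(\{0\})$ for each pair $i<j$ (level $j$ copies level $i$'s location, higher levels shift up by one); multiple-birth events given by a Poisson point process on $\mathbb{R}_+\times(0,1]$ with intensity $dt\otimes x^{-2}\Lambda_0(dx)$ ($\Lambda_0=\Lambda|_{(0,1]}$), at an atom $(t_i,x_i)$ each level independently participates with probability $x_i$, participants copy the location of the lowest participating level, other levels keep their order and shift up. For $0\le t\le s$, $L_j^s(t)$ is the level at time $t$ of the ancestor of the particle at level $j$ at time $s$. For $0\le r<s$, $N^{r,s}=\#\{L_j^s(r):j\ge1\}$ is the number of distinct ancestors at time $r$ of the particles alive at time $s$ (equivalently, the number of blocks of the partition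 in which $i\sim j$ iff $L_i^s(r)=L_j^s(r)$), and $N_{n,k}=N^{(k-1)2^{-n},\,k2^{-n}}$. *)

theory Defs
  imports "HOL-Probability.Probability"
begin

definition poisson_point_process :: "'w measure \<Rightarrow> ('w \<Rightarrow> 'a set) \<Rightarrow> 'a measure \<Rightarrow> bool" where
  "poisson_point_process M Xi mu \<longleftrightarrow>
     prob_space M \<and>
     (\<forall>\<omega>\<in>space M. Xi \<omega> \<subseteq> space mu) \<and>
     (\<forall>A\<in>sets mu. emeasure mu A < \<infinity> \<longrightarrow>
        (AE \<omega> in M. finite (Xi \<omega> \<inter> A)) \<and>
        (\<lambda>\<omega>. card (Xi \<omega> \<inter> A)) \<in> measurable M (count_space UNIV) \<and>
        (\<forall>k::nat. measure M {\<omega>\<in>space M. card (Xi \<omega> \<inter> A) = k} =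
            (enn2real (emeasure mu A)) ^ k / fact k * exp (- enn2real (emeasure mu A)))) \<and>
     (\<forall>(A :: nat \<Rightarrow> 'a set) n.
        (\<forall>i<n. A i \<in> sets mu \<and> emeasure mu (A i) < \<infinity>) \<and> disjoint_family_on A {..<n} \<longrightarrow>
        prob_space.indep_vars M (\<lambda>_. count_space UNIV) (\<lambda>i \<omega>. card (Xi \<omega> \<inter> A i)) {..<n})"

text \<open>An event of the lookdown construction is a pair (t, b): its time t and a
participation indicator b on levels (level k participates iff b k; level 0 is unused,
levels are 1, 2, ...).\<close>

type_synonym event = "real \<times> (nat \<Rightarrow> bool)"

definition mark_space :: "(nat \<Rightarrow> bool) measure" where
  "mark_space = PiM UNIV (\<lambda>_::nat. count_space (UNIV :: bool set))"

text \<open>Mark intensity: Lambda({0}) times counting measure on the pair-indicators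
{i,j} with 1 \<le> i < j (single-birth events), plus the mixture over x in (0,1] with
density x^(-2) Lambda_0(dx) of i.i.d. Bernoulli(x) participation (multiple-birth events).\<close>

definition mark_intensity :: "real measure \<Rightarrow> (nat \<Rightarrow> bool) measure" where
  "mark_intensity \<Lambda> = measure_of (space mark_space) (sets mark_space)
     (\<lambda>B. emeasure \<Lambda> {0} *
            emeasure (count_space UNIV)
              {(i::nat, j::nat). 1 \<le> i \<and> i < j \<and> (\<lambda>k. k = i \<or> k = j) \<in> B}
          + (\<integral>\<^sup>+x\<in>{0<..1}. ennreal (1 / x\<^sup>2) *
              emeasure (PiM UNIV (\<lambda>_::nat. measure_pmf (bernoulli_pmf x))) B \<partial>\<Lambda>))"

definition event_intensity :: "real measure \<Rightarrow> event measure" where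
  "event_intensity \<Lambda> = restrict_space lborel {0..} \<Otimes>\<^sub>M mark_intensity \<Lambda>"

definition participants :: "(nat \<Rightarrow> bool) \<Rightarrow> nat set" where
  "participants b = {k. 1 \<le> k \<and> b k}"

text \<open>Level map of one event: the post-event level k is mapped to the pre-event level
of the particle it descends from. (For the coalescent this is the new rank of a block of
old rank k.)\<close>

definition level_map :: "nat set \<Rightarrow> nat \<Rightarrow> nat" where
  "level_map P k =
     (if P = {} then k
      else let l = (LEAST p. p \<in> P) in
        if k \<in> P then l
        else if k < l then k
        else k - card {p\<in>P. p < k} + 1)"

text \<open>An event is relevant for levels 1..j iff at least two of these levels participate;
other events fix all levels \<le> j.\<close>

definition relevant :: "nat \<Rightarrow> event \<Rightarrow> bool" where
  "relevant j e \<longleftrightarrow> 2 \<le> card (participants (snd e) \<inter> {1..j})"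

fun comp_desc :: "nat \<Rightarrow> event set \<Rightarrow> nat \<Rightarrow> nat" where
  "comp_desc 0 E k = k"
| "comp_desc (Suc n) E k =
     (let e = (SOME e. e \<in> E \<and> (\<forall>e'\<in>E. fst e' \<le> fst e))
      in comp_desc n (E - {e}) (level_map (participants (snd e)) k))"

fun comp_asc :: "nat \<Rightarrow> event set \<Rightarrow> nat \<Rightarrow> nat" where
  "comp_asc 0 E k = k"
| "comp_asc (Suc n) E k =
     (let e = (SOME e. e \<in> E \<and> (\<forall>e'\<in>E. fst e \<le> fst e'))
      in comp_asc n (E - {e}) (level_map (participants (snd e)) k))"

text \<open>Lookdown: L_j^s(r), the level at time r of the ancestor of the particle at level j
at time s (events in (r,s] act; the value 0 flags the null event of infinitely many
relevant events).\<close>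

definition ancestor_level :: "event set \<Rightarrow> real \<Rightarrow> real \<Rightarrow> nat \<Rightarrow> nat" where
  "ancestor_level Xi r s j =
     (let E = {e\<in>Xi. r < fst e \<and> fst e \<le> s \<and> relevant j e}
      in if finite E then comp_desc (card E) E j else 0)"

text \<open>The set {L_j^s(r) : j \<ge> 1}; N^{r,s} is its cardinality.\<close>
definition ancestors :: "event set \<Rightarrow> real \<Rightarrow> real \<Rightarrow> nat set" where
  "ancestors Xi r s = {ancestor_level Xi r s j | j. 1 \<le> j}"

text \<open>N_{n,k} \<le> bound, with N_{n,k} = N^{(k-1)2^-n, k 2^-n} (an infinite N exceeds every bound).\<close>
definition N_nk_less :: "event set \<Rightarrow> nat \<Rightarrow> nat \<Rightarrow> real \<Rightarrow> bool" where
  "N_nk_less Xi n k c \<longleftrightarrow>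
     (let A = ancestors Xi ((real k - 1) / 2 ^ n) (real k / 2 ^ n)
      in finite A \<and> real (card A) < c)"

text \<open>Lambda-coalescent via Pitman's Poisson construction driven by the same events:
block_rank Xi t i is the rank (by least element) at time t of the block containing i;
Pi(t) has i ~ j iff their ranks agree, so #Pi(t) = #{ranks}.\<close>

definition block_rank :: "event set \<Rightarrow> real \<Rightarrow> nat \<Rightarrow> nat" where
  "block_rank Xi t i =
     (let E = {e\<in>Xi. 0 \<le> fst e \<and> fst e \<le> t \<and> relevant i e}
      in if finite E then comp_asc (card E) E i else 0)"

definition coal_blocks :: "event set \<Rightarrow> real \<Rightarrow> nat set" where
  "coal_blocks Xi t = block_rank Xi t ` {1..}"

text \<open>T_m = inf{t \<ge> 0 : #Pi(t) \<le> m}, inf of the empty set = \<infinity>.\<close>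
definition T_hit :: "event set \<Rightarrow> nat \<Rightarrow> ennreal" where
  "T_hit Xi m = Inf {ennreal t | t. 0 \<le> t \<and> finite (coal_blocks Xi t) \<and> card (coal_blocks Xi t) \<le> m}"

end

theory Submission
  imports Defs
begin


lemma lm_le: "level_map P k \<le> k"
proof (cases "P = {}")
  case True then show ?thesis by (simp add: level_map_def)
next
  case False
  define l where "l = (LEAST p. p \<in> P)"
  have lP: "l \<in> P" using False unfolding l_def by (metis LeastI ex_in_conv)
  have lmin: "\<And>p. p \<in> P \<Longrightarrow> l \<le> p" unfolding l_def by (simp add: Least_le)
  show ?thesis
  proof (cases "k \<in> P")
    case True then show ?thesis using False lmin by (simp add: level_map_def Let_def l_def[symmetric])
  next
    case kn: False
    show ?thesis
    proof (cases "k < l")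
      case True then show ?thesis using False kn by (simp add: level_map_def Let_def l_def[symmetric])
    next
      case False2: False
      have "l < k" using False2 kn lP by (metis antisym_conv2 not_less)
      have fin: "finite {p\<in>P. p < k}" by simp
      have "l \<in> {p\<in>P. p < k}" using lP \<open>l < k\<close> by simp
      then have "card {p\<in>P. p < k} \<ge> 1" using fin by (metis One_nat_def Suc_leI card_gt_0_iff empty_iff)
      then show ?thesis using False kn False2 \<open>l < k\<close>
        by (simp add: level_map_def Let_def l_def[symmetric])
    qed
  qed
qed

lemma lm_restrict:
  assumes "0 \<notin> P" "k \<le> J" "P \<inter> {1..J} \<noteq> {}"
  shows "level_map P k = level_map (P \<inter> {1..J}) k"
proof -
  have Pne: "P \<noteq> {}" using assms(3) by auto
  define l where "l = (LEAST p. p \<in> P)"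
  have lP: "l \<in> P" using Pne unfolding l_def by (metis LeastI ex_in_conv)
  have lmin: "\<And>p. p \<in> P \<Longrightarrow> l \<le> p" unfolding l_def by (simp add: Least_le)
  obtain q where q: "q \<in> P" "q \<le> J" using assms(3) by auto
  have lJ: "l \<le> J" using lmin[OF q(1)] q(2) by simp
  have l1: "1 \<le> l" using lP assms(1) by (cases l) auto
  have lS: "l \<in> P \<inter> {1..J}" using lP lJ l1 by simp
  have "(LEAST p. p \<in> P \<inter> {1..J}) = l"
    by (rule Least_equality) (use lS lmin in auto)
  moreover have "(k \<in> P) = (k \<in> P \<inter> {1..J})" using assms(1,2) by (cases k) auto
  moreover have "{p\<in>P. p < k} = {p\<in>P \<inter> {1..J}. p < k}" using assms(1,2)
    by (auto simp: Suc_le_eq) (metis gr0I)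
  ultimately show ?thesis using Pne assms(3)
    by (simp add: level_map_def Let_def l_def[symmetric])
qed

lemma lm_fix:
  assumes "0 \<notin> P" "card (P \<inter> {1..J}) \<le> 1" "k \<le> J"
  shows "level_map P k = k"
proof (cases "P = {}")
  case True then show ?thesis by (simp add: level_map_def)
next
  case Pne: False
  define l where "l = (LEAST p. p \<in> P)"
  have lP: "l \<in> P" using Pne unfolding l_def by (metis LeastI ex_in_conv)
  have lmin: "\<And>p. p \<in> P \<Longrightarrow> l \<le> p" unfolding l_def by (simp add: Least_le)
  have l1: "1 \<le> l" using lP assms(1) by (cases l) auto
  have fin: "finite (P \<inter> {1..J})" by simp
  have uniq: "\<And>x y. x \<in> P \<inter> {1..J} \<Longrightarrow> y \<in> P \<inter> {1..J} \<Longrightarrow> x = y"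
  proof -
    fix x y assume xy: "x \<in> P \<inter> {1..J}" "y \<in> P \<inter> {1..J}"
    show "x = y"
    proof (rule ccontr)
      assume "x \<noteq> y"
      then have "{x,y} \<subseteq> P \<inter> {1..J}" "card {x,y} = 2" using xy by auto
      then have "2 \<le> card (P \<inter> {1..J})" using fin by (metis card_mono)
      then show False using assms(2) by simp
    qed
  qed
  show ?thesis
  proof (cases "k \<in> P")
    case True
    have k1: "1 \<le> k" using True assms(1) by (cases k) auto
    have "l \<le> J" using lmin[OF True] assms(3) by simp
    then have "l = k" using uniq[of l k] lP True l1 k1 assms(3) by simp
    then show ?thesis using Pne True by (simp add: level_map_def Let_def l_def[symmetric])
  next
    case kn: False
    show ?thesis
    proof (cases "k < l")
      case True then show ?thesis using Pne kn by (simp add: level_map_def Let_def l_def[symmetric])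
    next
      case False2: False
      have "l < k" using False2 kn lP by (metis antisym_conv2 not_less)
      have "{p\<in>P. p < k} = {l}"
      proof
        show "{l} \<subseteq> {p\<in>P. p < k}" using lP \<open>l<k\<close> by simp
        show "{p\<in>P. p < k} \<subseteq> {l}"
        proof
          fix p assume "p \<in> {p\<in>P. p < k}"
          then have "p \<in> P \<inter> {1..J}" using assms(1,3) by (cases p) auto
          moreover have "l \<in> P \<inter> {1..J}" using lP l1 \<open>l<k\<close> assms(3) by simp
          ultimately show "p \<in> {l}" using uniq by auto
        qed
      qed
      then show ?thesis using Pne kn False2 \<open>l < k\<close>
        by (simp add: level_map_def Let_def l_def[symmetric])
    qed
  qed
qed


lemma participants_0: "0 \<notin> participants b" by (simp add: participants_def)

lemma ex_max_fst: "finite E \<Longrightarrow> E \<noteq> {} \<Longrightarrow> \<exists>e\<in>E. \<forall>e'\<in>E. fst e' \<le> fst (e::event)"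
proof -
  assume fE: "finite E" and ne: "E \<noteq> {}"
  have "Max (fst ` E) \<in> fst ` E" using fE ne by simp
  then obtain e where e: "e \<in> E" "fst e = Max (fst ` E)" by auto
  have "\<forall>e'\<in>E. fst e' \<le> fst e"
  proof
    fix e' assume "e' \<in> E"
    then have "fst e' \<in> fst ` E" by simp
    then have "fst e' \<le> Max (fst ` E)" using fE by simp
    then show "fst e' \<le> fst e" using e(2) by simp
  qed
  then show ?thesis using e(1) by blast
qed

lemma ex_min_fst: "finite E \<Longrightarrow> E \<noteq> {} \<Longrightarrow> \<exists>e\<in>E. \<forall>e'\<in>E. fst e \<le> fst (e'::event)"
proof -
  assume fE: "finite E" and ne: "E \<noteq> {}"
  have "Min (fst ` E) \<in> fst ` E" using fE ne by simp
  then obtain e where e: "e \<in> E" "fst e = Min (fst ` E)" by auto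
  have "\<forall>e'\<in>E. fst e \<le> fst e'"
  proof
    fix e' assume "e' \<in> E"
    then have "fst e' \<in> fst ` E" by simp
    then have "Min (fst ` E) \<le> fst e'" using fE by simp
    then show "fst e \<le> fst e'" using e(2) by simp
  qed
  then show ?thesis using e(1) by blast
qed

lemma comp_desc_step:
  assumes "finite E" "inj_on fst E" "e \<in> E" "\<forall>e'\<in>E. fst e' \<le> fst (e::event)"
  shows "comp_desc (card E) E k = comp_desc (card E - 1) (E - {e}) (level_map (participants (snd e)) k)"
proof -
  have "card E \<noteq> 0" using assms(1,3) by auto
  then obtain n where n: "card E = Suc n" using not0_implies_Suc by blast
  define e0 where "e0 = (SOME e. e \<in> E \<and> (\<forall>e'\<in>E. fst e' \<le> fst e))"
  have e0: "e0 \<in> E \<and> (\<forall>e'\<in>E. fst e' \<le> fst e0)" unfolding e0_def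
    by (rule someI[of _ e]) (use assms(3,4) in blast)
  then have "fst e0 = fst e" using assms(3,4) by (meson antisym)
  then have "e0 = e" using e0 assms(2,3) unfolding inj_on_def by blast
  have "comp_desc (Suc n) E k = comp_desc n (E - {e0}) (level_map (participants (snd e0)) k)"
    unfolding e0_def comp_desc.simps Let_def ..
  then show ?thesis unfolding n \<open>e0 = e\<close> by simp
qed

lemma comp_asc_step:
  assumes "finite E" "inj_on fst E" "e \<in> E" "\<forall>e'\<in>E. fst e \<le> fst (e'::event)"
  shows "comp_asc (card E) E k = comp_asc (card E - 1) (E - {e}) (level_map (participants (snd e)) k)"
proof -
  have "card E \<noteq> 0" using assms(1,3) by auto
  then obtain n where n: "card E = Suc n" using not0_implies_Suc by blast
  define e0 where "e0 = (SOME e. e \<in> E \<and> (\<forall>e'\<in>E. fst e \<le> fst e'))"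
  have e0: "e0 \<in> E \<and> (\<forall>e'\<in>E. fst e0 \<le> fst e')" unfolding e0_def
    by (rule someI[of _ e]) (use assms(3,4) in blast)
  then have "fst e0 = fst e" using assms(3,4) by (meson antisym)
  then have "e0 = e" using e0 assms(2,3) unfolding inj_on_def by blast
  have "comp_asc (Suc n) E k = comp_asc n (E - {e0}) (level_map (participants (snd e0)) k)"
    unfolding e0_def comp_asc.simps Let_def ..
  then show ?thesis unfolding n \<open>e0 = e\<close> by simp
qed
lemma comp_desc_split:
  assumes "finite E" "inj_on fst E" "E = E1 \<union> E2" "\<forall>a\<in>E1. \<forall>b\<in>E2. fst a < fst (b::event)"
  shows "comp_desc (card E) E k = comp_desc (card E1) E1 (comp_desc (card E2) E2 k)"
  using assms
proof (induction "card E2" arbitrary: E E2 k)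
  case 0
  then have "E2 = {}" using infinite_super[of E2 E] by auto
  then show ?case using 0 by simp
next
  case (Suc n)
  have f2: "finite E2" using Suc.prems(1,3) by simp
  have ne: "E2 \<noteq> {}" using Suc.hyps(2) by auto
  obtain e where e: "e \<in> E2" "\<forall>e'\<in>E2. fst e' \<le> fst e" using ex_max_fst[OF f2 ne] by blast
  have eE: "e \<in> E" "\<forall>e'\<in>E. fst e' \<le> fst e" using e Suc.prems(3,4) by (auto, fastforce)
  have eE1: "e \<notin> E1" using Suc.prems(4) e(1) by fastforce
  have s1: "comp_desc (card E) E k = comp_desc (card E - 1) (E - {e}) (level_map (participants (snd e)) k)"
    by (rule comp_desc_step[OF Suc.prems(1,2) eE])
  have s2: "comp_desc (card E2) E2 k = comp_desc (card E2 - 1) (E2 - {e}) (level_map (participants (snd e)) k)"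
    by (rule comp_desc_step[OF f2 inj_on_subset[OF Suc.prems(2)] e]) (use Suc.prems(3) in auto)
  have "comp_desc (card (E - {e})) (E - {e}) (level_map (participants (snd e)) k) =
     comp_desc (card E1) E1 (comp_desc (card (E2 - {e})) (E2 - {e}) (level_map (participants (snd e)) k))"
  proof (rule Suc.hyps(1))
    show "n = card (E2 - {e})" using Suc.hyps(2) e(1) f2 by simp
    show "finite (E - {e})" using Suc.prems(1) by simp
    show "inj_on fst (E - {e})" using inj_on_subset[OF Suc.prems(2)] by blast
    show "E - {e} = E1 \<union> (E2 - {e})" using Suc.prems(3) eE1 by blast
    show "\<forall>a\<in>E1. \<forall>b\<in>E2 - {e}. fst a < fst b" using Suc.prems(4) by blast
  qed
  then show ?case using s1 s2 eE(1) e(1) Suc.prems(1) f2 by simp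
qed

lemma comp_asc_split:
  assumes "finite E" "inj_on fst E" "E = E1 \<union> E2" "\<forall>a\<in>E1. \<forall>b\<in>E2. fst a < fst (b::event)"
  shows "comp_asc (card E) E k = comp_asc (card E2) E2 (comp_asc (card E1) E1 k)"
  using assms
proof (induction "card E1" arbitrary: E E1 k)
  case 0
  then have "E1 = {}" using infinite_super[of E1 E] by auto
  then show ?case using 0 by simp
next
  case (Suc n)
  have f1: "finite E1" using Suc.prems(1,3) by simp
  have ne: "E1 \<noteq> {}" using Suc.hyps(2) by auto
  obtain e where e: "e \<in> E1" "\<forall>e'\<in>E1. fst e \<le> fst e'" using ex_min_fst[OF f1 ne] by blast
  have eE: "e \<in> E" "\<forall>e'\<in>E. fst e \<le> fst e'" using e Suc.prems(3,4) by (auto, fastforce)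
  have eE2: "e \<notin> E2" using Suc.prems(4) e(1) by fastforce
  have s1: "comp_asc (card E) E k = comp_asc (card E - 1) (E - {e}) (level_map (participants (snd e)) k)"
    by (rule comp_asc_step[OF Suc.prems(1,2) eE])
  have s2: "comp_asc (card E1) E1 k = comp_asc (card E1 - 1) (E1 - {e}) (level_map (participants (snd e)) k)"
    by (rule comp_asc_step[OF f1 inj_on_subset[OF Suc.prems(2)] e]) (use Suc.prems(3) in auto)
  have "comp_asc (card (E - {e})) (E - {e}) (level_map (participants (snd e)) k) =
     comp_asc (card E2) E2 (comp_asc (card (E1 - {e})) (E1 - {e}) (level_map (participants (snd e)) k))"
  proof (rule Suc.hyps(1))
    show "n = card (E1 - {e})" using Suc.hyps(2) e(1) f1 by simp
    show "finite (E - {e})" using Suc.prems(1) by simp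
    show "inj_on fst (E - {e})" using inj_on_subset[OF Suc.prems(2)] by blast
    show "E - {e} = (E1 - {e}) \<union> E2" using Suc.prems(3) eE2 by blast
    show "\<forall>a\<in>E1 - {e}. \<forall>b\<in>E2. fst a < fst b" using Suc.prems(4) by blast
  qed
  then show ?case using s1 s2 eE(1) e(1) Suc.prems(1) f1 by simp
qed

lemma comp_desc_le: "comp_desc n E k \<le> k"
proof (induction n arbitrary: E k)
  case 0 then show ?case by simp
next
  case (Suc n)
  have "comp_desc (Suc n) E k = comp_desc n (E - {SOME e. e \<in> E \<and> (\<forall>e'\<in>E. fst e' \<le> fst e)})
     (level_map (participants (snd (SOME e. e \<in> E \<and> (\<forall>e'\<in>E. fst e' \<le> fst e)))) k)"
    by (simp add: Let_def)
  also have "\<dots> \<le> level_map (participants (snd (SOME e. e \<in> E \<and> (\<forall>e'\<in>E. fst e' \<le> fst e)))) k"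
    by (rule Suc.IH)
  also have "\<dots> \<le> k" by (rule lm_le)
  finally show ?case .
qed

lemma comp_asc_le: "comp_asc n E k \<le> k"
proof (induction n arbitrary: E k)
  case 0 then show ?case by simp
next
  case (Suc n)
  have "comp_asc (Suc n) E k = comp_asc n (E - {SOME e. e \<in> E \<and> (\<forall>e'\<in>E. fst e \<le> fst e')})
     (level_map (participants (snd (SOME e. e \<in> E \<and> (\<forall>e'\<in>E. fst e \<le> fst e')))) k)"
    by (simp add: Let_def)
  also have "\<dots> \<le> level_map (participants (snd (SOME e. e \<in> E \<and> (\<forall>e'\<in>E. fst e \<le> fst e')))) k"
    by (rule Suc.IH)
  also have "\<dots> \<le> k" by (rule lm_le)
  finally show ?case .
qed


lemma comp_desc_rel:
  assumes "finite E" "inj_on fst E" "k \<le> J"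
  shows "comp_desc (card E) E k = comp_desc (card {e\<in>E. relevant J e}) {e\<in>E. relevant J e} k"
  using assms
proof (induction "card E" arbitrary: E k)
  case 0 then show ?case by simp
next
  case (Suc n)
  have ne: "E \<noteq> {}" using Suc.hyps(2) by auto
  obtain e where e: "e \<in> E" "\<forall>e'\<in>E. fst e' \<le> fst e" using ex_max_fst[OF Suc.prems(1) ne] by blast
  let ?x = "level_map (participants (snd e)) k"
  let ?G = "{e'\<in>E - {e}. relevant J e'}"
  let ?F = "{e\<in>E. relevant J e}"
  have cE: "card (E - {e}) = card E - 1" using e(1) Suc.prems(1) by (simp add: card_Diff_singleton)
  have s1: "comp_desc (card E) E k = comp_desc (card (E - {e})) (E - {e}) ?x"
    unfolding cE by (rule comp_desc_step[OF Suc.prems(1,2) e])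
  have IH: "comp_desc (card (E - {e})) (E - {e}) x = comp_desc (card ?G) ?G x" if "x \<le> J" for x
  proof (rule Suc.hyps(1))
    show "n = card (E - {e})" using Suc.hyps(2) cE by simp
    show "finite (E - {e})" using Suc.prems(1) by simp
    show "inj_on fst (E - {e})" using inj_on_subset[OF Suc.prems(2)] by blast
  qed (rule that)
  show ?case
  proof (cases "relevant J e")
    case True
    have eF: "e \<in> ?F" using e(1) True by simp
    have fF: "finite ?F" using Suc.prems(1) by simp
    have cF: "card (?F - {e}) = card ?F - 1" using eF fF by (simp add: card_Diff_singleton)
    have s2: "comp_desc (card ?F) ?F k = comp_desc (card (?F - {e})) (?F - {e}) ?x"
      unfolding cF by (rule comp_desc_step) (use Suc.prems e True inj_on_subset[OF Suc.prems(2), of ?F] in auto)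
    have G: "?G = ?F - {e}" by auto
    have xJ: "?x \<le> J" using lm_le[of _ k] Suc.prems(3) by (rule order_trans)
    show ?thesis unfolding s1 IH[OF xJ] s2 G ..
  next
    case False
    have fx: "?x = k"
      by (rule lm_fix[OF participants_0 _ Suc.prems(3)]) (use False in \<open>simp add: relevant_def\<close>)
    have G: "?G = ?F" using False by auto
    show ?thesis unfolding s1 fx IH[OF Suc.prems(3)] G ..
  qed
qed

lemma comp_asc_rel:
  assumes "finite E" "inj_on fst E" "k \<le> J"
  shows "comp_asc (card E) E k = comp_asc (card {e\<in>E. relevant J e}) {e\<in>E. relevant J e} k"
  using assms
proof (induction "card E" arbitrary: E k)
  case 0 then show ?case by simp
next
  case (Suc n)
  have ne: "E \<noteq> {}" using Suc.hyps(2) by auto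
  obtain e where e: "e \<in> E" "\<forall>e'\<in>E. fst e \<le> fst e'" using ex_min_fst[OF Suc.prems(1) ne] by blast
  let ?x = "level_map (participants (snd e)) k"
  let ?G = "{e'\<in>E - {e}. relevant J e'}"
  let ?F = "{e\<in>E. relevant J e}"
  have cE: "card (E - {e}) = card E - 1" using e(1) Suc.prems(1) by (simp add: card_Diff_singleton)
  have s1: "comp_asc (card E) E k = comp_asc (card (E - {e})) (E - {e}) ?x"
    unfolding cE by (rule comp_asc_step[OF Suc.prems(1,2) e])
  have IH: "comp_asc (card (E - {e})) (E - {e}) x = comp_asc (card ?G) ?G x" if "x \<le> J" for x
  proof (rule Suc.hyps(1))
    show "n = card (E - {e})" using Suc.hyps(2) cE by simp
    show "finite (E - {e})" using Suc.prems(1) by simp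
    show "inj_on fst (E - {e})" using inj_on_subset[OF Suc.prems(2)] by blast
  qed (rule that)
  show ?case
  proof (cases "relevant J e")
    case True
    have eF: "e \<in> ?F" using e(1) True by simp
    have fF: "finite ?F" using Suc.prems(1) by simp
    have cF: "card (?F - {e}) = card ?F - 1" using eF fF by (simp add: card_Diff_singleton)
    have s2: "comp_asc (card ?F) ?F k = comp_asc (card (?F - {e})) (?F - {e}) ?x"
      unfolding cF by (rule comp_asc_step) (use Suc.prems e True inj_on_subset[OF Suc.prems(2), of ?F] in auto)
    have G: "?G = ?F - {e}" by auto
    have xJ: "?x \<le> J" using lm_le[of _ k] Suc.prems(3) by (rule order_trans)
    show ?thesis unfolding s1 IH[OF xJ] s2 G ..
  next
    case False
    have fx: "?x = k"
      by (rule lm_fix[OF participants_0 _ Suc.prems(3)]) (use False in \<open>simp add: relevant_def\<close>)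
    have G: "?G = ?F" using False by auto
    show ?thesis unfolding s1 fx IH[OF Suc.prems(3)] G ..
  qed
qed


definition cellT :: "real \<Rightarrow> real \<Rightarrow> nat \<Rightarrow> real set" where
  "cellT a h i = {\<tau>. a + real i * h < \<tau> \<and> \<tau> \<le> a + real (Suc i) * h}"
definition markset :: "nat \<Rightarrow> nat set \<Rightarrow> (nat \<Rightarrow> bool) set" where
  "markset J S = {b. participants b \<inter> {1..J} = S}"
definition letters :: "nat \<Rightarrow> nat set set" where
  "letters J = {S. S \<subseteq> {1..J} \<and> 2 \<le> card S}"
definition Rset :: "nat \<Rightarrow> (nat \<Rightarrow> bool) set" where
  "Rset J = {b. 2 \<le> card (participants b \<inter> {1..J})}"
definition cmap :: "nat \<Rightarrow> (nat \<times> nat set \<Rightarrow> nat) \<Rightarrow> nat \<Rightarrow> nat \<Rightarrow> nat" where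
  "cmap J y i k = (if \<exists>S\<in>letters J. 1 \<le> y (i,S)
      then level_map (SOME S. S \<in> letters J \<and> 1 \<le> y (i,S)) k else k)"

fun phiL :: "nat \<Rightarrow> (nat \<times> nat set \<Rightarrow> nat) \<Rightarrow> nat \<Rightarrow> nat \<Rightarrow> nat" where
  "phiL J y 0 k = k"
| "phiL J y (Suc n) k = phiL J y n (cmap J y n k)"

fun psiC :: "nat \<Rightarrow> (nat \<times> nat set \<Rightarrow> nat) \<Rightarrow> nat \<Rightarrow> nat \<Rightarrow> nat" where
  "psiC J y 0 k = k"
| "psiC J y (Suc n) k = cmap J y n (psiC J y n k)"

lemma relevant_Rset: "relevant J e \<longleftrightarrow> snd e \<in> Rset J"
  by (simp add: relevant_def Rset_def)

lemma finite_letters: "finite (letters J)"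
  by (rule finite_subset[of _ "Pow {1..J}"]) (auto simp: letters_def)

lemma Rset_UN: "A \<times> Rset J = (\<Union>S\<in>letters J. A \<times> markset J S)"
  by (auto simp: Rset_def markset_def letters_def)

lemma markset_disj: "S \<noteq> S' \<Longrightarrow> markset J S \<inter> markset J S' = {}"
  by (auto simp: markset_def)

lemma card_Rset_sum:
  assumes "finite (X \<inter> (A \<times> Rset J))"
  shows "card (X \<inter> (A \<times> Rset J)) = (\<Sum>S\<in>letters J. card (X \<inter> (A \<times> markset J S)))"
proof -
  have "X \<inter> (A \<times> Rset J) = (\<Union>S\<in>letters J. X \<inter> (A \<times> markset J S))" using Rset_UN[of A J] by auto
  moreover have "card (\<Union>S\<in>letters J. X \<inter> (A \<times> markset J S)) = (\<Sum>S\<in>letters J. card (X \<inter> (A \<times> markset J S)))"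
  proof (rule card_UN_disjoint[OF finite_letters])
    show "\<forall>S\<in>letters J. finite (X \<inter> (A \<times> markset J S))"
    proof
      fix S assume "S \<in> letters J"
      then have "X \<inter> (A \<times> markset J S) \<subseteq> X \<inter> (A \<times> Rset J)"
        by (auto simp: markset_def Rset_def letters_def)
      then show "finite (X \<inter> (A \<times> markset J S))" using assms by (rule finite_subset)
    qed
    show "\<forall>S\<in>letters J. \<forall>S'\<in>letters J. S \<noteq> S' \<longrightarrow> X \<inter> (A \<times> markset J S) \<inter> (X \<inter> (A \<times> markset J S')) = {}"
      using markset_disj by blast
  qed
  ultimately show ?thesis by simp
qed

lemma cell_step:
  assumes fin: "finite C" and one: "card C \<le> 1" and rel: "\<forall>e\<in>C. relevant J e"
    and y: "\<forall>S\<in>letters J. y (n,S) = card (C \<inter> (UNIV \<times> markset J S))" and k: "k \<le> J"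
  shows "comp_desc (card C) C k = cmap J y n k" "comp_asc (card C) C k = cmap J y n k"
proof -
  have "comp_desc (card C) C k = cmap J y n k \<and> comp_asc (card C) C k = cmap J y n k"
  proof (cases "card C = 0")
    case True
    then have C0: "C = {}" using fin by simp
    then have "\<forall>S\<in>letters J. y (n,S) = 0" using y by simp
    then show ?thesis using C0 by (simp add: cmap_def)
  next
    case False
    then have "card C = 1" using one by simp
    then obtain e where Ce: "C = {e}" using card_1_singletonE by blast
    define S0 where "S0 = participants (snd e) \<inter> {1..J}"
    have relS0: "2 \<le> card S0" using rel Ce by (simp add: relevant_def S0_def)
    have S0L: "S0 \<in> letters J" using relS0 by (simp add: letters_def S0_def)
    have yS: "y (n,S) = (if S = S0 then 1 else 0)" if "S \<in> letters J" for S
    proof (cases "S = S0")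
      case True
      then have "C \<inter> (UNIV \<times> markset J S) = {e}" using Ce by (auto simp: markset_def S0_def)
      then show ?thesis using y that True by simp
    next
      case False
      then have "C \<inter> (UNIV \<times> markset J S) = {}" using Ce by (auto simp: markset_def S0_def)
      then show ?thesis using y that False by simp
    qed
    have ex: "\<exists>S\<in>letters J. 1 \<le> y (n,S)" using S0L yS by auto
    have some: "(SOME S. S \<in> letters J \<and> 1 \<le> y (n,S)) = S0"
      by (rule some_equality) (use S0L yS in \<open>auto split: if_splits\<close>)
    have S0ne: "S0 \<noteq> {}" using relS0 by auto
    have lm: "level_map S0 k = level_map (participants (snd e)) k"
      using lm_restrict[OF participants_0 k, of "snd e"] S0ne by (simp add: S0_def)
    have sd: "(SOME x. x \<in> {e} \<and> (\<forall>e'\<in>{e}. fst e' \<le> fst x)) = e" by (rule some_equality) auto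
    have sa: "(SOME x. x \<in> {e} \<and> (\<forall>e'\<in>{e}. fst x \<le> fst e')) = e" by (rule some_equality) auto
    have c1: "card C = Suc 0" using Ce by simp
    have d: "comp_desc (card C) C k = level_map (participants (snd e)) k"
      unfolding c1 comp_desc.simps Let_def unfolding Ce sd by simp
    have a: "comp_asc (card C) C k = level_map (participants (snd e)) k"
      unfolding c1 comp_asc.simps Let_def unfolding Ce sa by simp
    have cm: "cmap J y n k = level_map (participants (snd e)) k"
      unfolding cmap_def using ex some lm by simp
    show ?thesis using d a cm by simp
  qed
  then show "comp_desc (card C) C k = cmap J y n k" "comp_asc (card C) C k = cmap J y n k" by auto
qed

lemma cmap_le: "cmap J y n k \<le> k"
  by (simp add: cmap_def lm_le)

lemma cell_desc:
  assumes fin: "finite E" and inj: "inj_on fst E"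
    and win: "\<forall>e\<in>E. a < fst e \<and> fst e \<le> a + real M * h"
    and rel: "\<forall>e\<in>E. relevant J e"
    and one: "\<forall>i<M. card (E \<inter> (cellT a h i \<times> UNIV)) \<le> 1"
    and y: "\<forall>i<M. \<forall>S\<in>letters J. y (i,S) = card (E \<inter> (cellT a h i \<times> markset J S))"
    and hpos: "0 \<le> h"
  shows "n \<le> M \<Longrightarrow> k \<le> J \<Longrightarrow>
    comp_desc (card {e\<in>E. fst e \<le> a + real n * h}) {e\<in>E. fst e \<le> a + real n * h} k = phiL J y n k"
proof (induction n arbitrary: k)
  case 0
  have E0: "{e\<in>E. fst e \<le> a + real 0 * h} = {}" using win by force
  show ?case unfolding E0 by simp
next
  case (Suc n)
  let ?En = "{e\<in>E. fst e \<le> a + real n * h}"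
  let ?C = "E \<inter> (cellT a h n \<times> UNIV)"
  have eq: "{e\<in>E. fst e \<le> a + real (Suc n) * h} = ?En \<union> ?C"
  proof -
    have "a + real n * h \<le> a + real (Suc n) * h" using hpos by (simp add: algebra_simps)
    then show ?thesis using win by (auto simp: cellT_def)
  qed
  have sp: "comp_desc (card (?En \<union> ?C)) (?En \<union> ?C) k = comp_desc (card ?En) ?En (comp_desc (card ?C) ?C k)"
  proof (rule comp_desc_split)
    have sub: "?En \<union> ?C \<subseteq> E" by blast
    show "finite (?En \<union> ?C)" using finite_subset[OF sub fin] .
    show "inj_on fst (?En \<union> ?C)" using inj_on_subset[OF inj sub] .
    show "\<forall>a\<in>?En. \<forall>b\<in>?C. fst a < fst b" by (auto simp: cellT_def)
  qed simp
  have nM: "n < M" using Suc.prems(1) by simp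
  have yC: "\<forall>S\<in>letters J. y (n,S) = card (?C \<inter> (UNIV \<times> markset J S))"
  proof
    fix S assume "S \<in> letters J"
    then have "y (n,S) = card (E \<inter> (cellT a h n \<times> markset J S))" using y nM by blast
    also have "E \<inter> (cellT a h n \<times> markset J S) = ?C \<inter> (UNIV \<times> markset J S)" by blast
    finally show "y (n,S) = card (?C \<inter> (UNIV \<times> markset J S))" .
  qed
  have fC: "finite ?C" using fin by simp
  have oC: "card ?C \<le> 1" using one nM by blast
  have rC: "\<forall>e\<in>?C. relevant J e" using rel by blast
  have cs: "comp_desc (card ?C) ?C k = cmap J y n k"
    by (rule cell_step(1)[OF fC oC rC yC Suc.prems(2)])
  have "comp_desc (card ?En) ?En (cmap J y n k) = phiL J y n (cmap J y n k)"
    by (rule Suc.IH) (use Suc.prems cmap_le[of J y n k] in auto)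
  then show ?case using eq sp cs by simp
qed

lemma cell_asc:
  assumes fin: "finite E" and inj: "inj_on fst E"
    and win: "\<forall>e\<in>E. a < fst e \<and> fst e \<le> a + real M * h"
    and rel: "\<forall>e\<in>E. relevant J e"
    and one: "\<forall>i<M. card (E \<inter> (cellT a h i \<times> UNIV)) \<le> 1"
    and y: "\<forall>i<M. \<forall>S\<in>letters J. y (i,S) = card (E \<inter> (cellT a h i \<times> markset J S))"
    and hpos: "0 \<le> h"
  shows "n \<le> M \<Longrightarrow> k \<le> J \<Longrightarrow>
    comp_asc (card {e\<in>E. fst e \<le> a + real n * h}) {e\<in>E. fst e \<le> a + real n * h} k = psiC J y n k"
proof (induction n arbitrary: k)
  case 0
  have E0: "{e\<in>E. fst e \<le> a + real 0 * h} = {}" using win by force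
  show ?case unfolding E0 by simp
next
  case (Suc n)
  let ?En = "{e\<in>E. fst e \<le> a + real n * h}"
  let ?C = "E \<inter> (cellT a h n \<times> UNIV)"
  have eq: "{e\<in>E. fst e \<le> a + real (Suc n) * h} = ?En \<union> ?C"
  proof -
    have "a + real n * h \<le> a + real (Suc n) * h" using hpos by (simp add: algebra_simps)
    then show ?thesis using win by (auto simp: cellT_def)
  qed
  have sp: "comp_asc (card (?En \<union> ?C)) (?En \<union> ?C) k = comp_asc (card ?C) ?C (comp_asc (card ?En) ?En k)"
  proof (rule comp_asc_split)
    have sub: "?En \<union> ?C \<subseteq> E" by blast
    show "finite (?En \<union> ?C)" using finite_subset[OF sub fin] .
    show "inj_on fst (?En \<union> ?C)" using inj_on_subset[OF inj sub] .
    show "\<forall>a\<in>?En. \<forall>b\<in>?C. fst a < fst b" by (auto simp: cellT_def)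
  qed simp
  have IH: "comp_asc (card ?En) ?En k = psiC J y n k"
    by (rule Suc.IH) (use Suc.prems in auto)
  have nM: "n < M" using Suc.prems(1) by simp
  have yC: "\<forall>S\<in>letters J. y (n,S) = card (?C \<inter> (UNIV \<times> markset J S))"
  proof
    fix S assume "S \<in> letters J"
    then have "y (n,S) = card (E \<inter> (cellT a h n \<times> markset J S))" using y nM by blast
    also have "E \<inter> (cellT a h n \<times> markset J S) = ?C \<inter> (UNIV \<times> markset J S)" by blast
    finally show "y (n,S) = card (?C \<inter> (UNIV \<times> markset J S))" .
  qed
  have fC: "finite ?C" using fin by simp
  have oC: "card ?C \<le> 1" using one nM by blast
  have rC: "\<forall>e\<in>?C. relevant J e" using rel by blast
  have pJ: "psiC J y n k \<le> J" using comp_asc_le[of "card ?En" ?En k] IH Suc.prems(2) by simp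
  have cs: "comp_asc (card ?C) ?C (psiC J y n k) = cmap J y n (psiC J y n k)"
    by (rule cell_step(2)[OF fC oC rC yC pJ])
  then show ?case using eq sp IH by simp
qed

lemma cmap_cong: "(\<And>S. S \<in> letters J \<Longrightarrow> y (i,S) = y' (i,S)) \<Longrightarrow> cmap J y i k = cmap J y' i k"
proof -
  assume h: "\<And>S. S \<in> letters J \<Longrightarrow> y (i,S) = y' (i,S)"
  have e1: "(\<exists>S\<in>letters J. 1 \<le> y (i,S)) = (\<exists>S\<in>letters J. 1 \<le> y' (i,S))" using h by auto
  have e2: "(SOME S. S \<in> letters J \<and> 1 \<le> y (i,S)) = (SOME S. S \<in> letters J \<and> 1 \<le> y' (i,S))"
    by (rule arg_cong[where f=Eps]) (use h in auto)
  show ?thesis unfolding cmap_def e1 e2 ..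
qed

lemma phiL_cong: "(\<And>i S. i < n \<Longrightarrow> S \<in> letters J \<Longrightarrow> y (i,S) = y' (i,S)) \<Longrightarrow> phiL J y n k = phiL J y' n k"
proof (induction n arbitrary: k)
  case 0 then show ?case by simp
next
  case (Suc n)
  have "cmap J y n k = cmap J y' n k" by (rule cmap_cong) (use Suc.prems in auto)
  then show ?case using Suc by simp
qed

lemma psiC_cong: "(\<And>i S. i < n \<Longrightarrow> S \<in> letters J \<Longrightarrow> y (i,S) = y' (i,S)) \<Longrightarrow> psiC J y n k = psiC J y' n k"
proof (induction n arbitrary: k)
  case 0 then show ?case by simp
next
  case (Suc n)
  have "psiC J y n k = psiC J y' n k" by (rule Suc.IH) (use Suc.prems in auto)
  moreover have "cmap J y n x = cmap J y' n x" for x by (rule cmap_cong) (use Suc.prems in auto)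
  ultimately show ?case by simp
qed

lemma phiL_psiC_rev:
  assumes "n \<le> M"
  shows "phiL J y M k = phiL J y (M - n) (psiC J (\<lambda>(i,S). y (M - 1 - i, S)) n k)"
  using assms
proof (induction n)
  case 0 then show ?case by simp
next
  case (Suc n)
  have c: "cmap J (\<lambda>(i,S). y (M - 1 - i, S)) n x = cmap J y (M - Suc n) x" for x
    by (simp add: cmap_def)
  have "M - n = Suc (M - Suc n)" using Suc.prems by simp
  then show ?case using Suc c by simp
qed

lemma phiL_eq_psiC_rev: "phiL J y M k = psiC J (\<lambda>(i,S). y (M - 1 - i, S)) M k"
  using phiL_psiC_rev[of M M J y k] by simp



lemma space_mark_space: "space mark_space = UNIV"
  by (auto simp: mark_space_def space_PiM)

lemma sets_mark_intensity: "sets (mark_intensity \<Lambda>) = sets mark_space"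
  unfolding mark_intensity_def
  by (subst sets_measure_of[OF sets.space_closed]) (rule sets.sigma_sets_eq)

lemma space_mark_intensity: "space (mark_intensity \<Lambda>) = UNIV"
  unfolding mark_intensity_def by (simp add: space_mark_space)

lemma markset_eq: "markset J S = (if S \<subseteq> {1..J} then {b\<in>space mark_space. \<forall>k\<in>{1..J}. b k \<in> {k \<in> S}} else {})"
  by (auto simp: markset_def participants_def space_mark_space)

lemma markset_sets: "markset J S \<in> sets mark_space"
proof -
  have "{b\<in>space mark_space. \<forall>k\<in>{1..J}. b k \<in> {k \<in> S}} \<in> sets mark_space"
  proof -
    have "{b\<in>space mark_space. \<forall>k\<in>{1..J}. b k \<in> {k \<in> S}} =
        prod_emb UNIV (\<lambda>_. count_space UNIV) {1..J} (Pi\<^sub>E {1..J} (\<lambda>k. {k \<in> S}))"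
      by (auto simp: prod_emb_def mark_space_def space_PiM PiE_def Pi_def)
    also have "\<dots> \<in> sets mark_space" unfolding mark_space_def
      by (rule sets_PiM_I) auto
    finally show ?thesis .
  qed
  then show ?thesis by (simp add: markset_eq)
qed

lemma coord_sets: "finite K \<Longrightarrow> {b\<in>space mark_space. \<forall>k\<in>K. b k \<in> X k} \<in> sets mark_space"
proof -
  assume K: "finite K"
  have "{b\<in>space mark_space. \<forall>k\<in>K. b k \<in> X k} =
      prod_emb UNIV (\<lambda>_. count_space UNIV) K (Pi\<^sub>E K X)"
    by (auto simp: prod_emb_def mark_space_def space_PiM PiE_def Pi_def)
  also have "\<dots> \<in> sets mark_space" unfolding mark_space_def
    by (rule sets_PiM_I) (use K in auto)
  finally show ?thesis .
qed

lemma Rset_sets: "Rset J \<in> sets mark_space"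
proof -
  have "Rset J = (\<Union>S\<in>letters J. markset J S)"
  proof
    show "Rset J \<subseteq> (\<Union>S\<in>letters J. markset J S)"
    proof
      fix x assume x: "x \<in> Rset J"
      then have "participants x \<inter> {1..J} \<in> letters J" by (simp add: Rset_def letters_def)
      moreover have "x \<in> markset J (participants x \<inter> {1..J})" by (simp add: markset_def)
      ultimately show "x \<in> (\<Union>S\<in>letters J. markset J S)" by blast
    qed
    show "(\<Union>S\<in>letters J. markset J S) \<subseteq> Rset J"
      by (auto simp: Rset_def markset_def letters_def)
  qed
  also have "\<dots> \<in> sets mark_space"
    using finite_letters markset_sets by (intro sets.finite_UN) auto
  finally show ?thesis .
qed

lemma markset_sub_Rset: "S \<in> letters J \<Longrightarrow> markset J S \<subseteq> Rset J"
  by (auto simp: markset_def Rset_def letters_def)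

definition FM :: "real measure \<Rightarrow> (nat \<Rightarrow> bool) set \<Rightarrow> ennreal" where
  "FM \<Lambda> B = emeasure \<Lambda> {0} *
            emeasure (count_space UNIV)
              {(i::nat, j::nat). 1 \<le> i \<and> i < j \<and> (\<lambda>k. k = i \<or> k = j) \<in> B}
          + (\<integral>\<^sup>+x\<in>{0<..1}. ennreal (1 / x\<^sup>2) *
              emeasure (PiM UNIV (\<lambda>_::nat. measure_pmf (bernoulli_pmf x))) B \<partial>\<Lambda>)"

lemma mark_intensity_FM: "mark_intensity \<Lambda> = measure_of (space mark_space) (sets mark_space) (FM \<Lambda>)"
  unfolding mark_intensity_def FM_def by simp

lemma emeasure_mark_le: "emeasure (mark_intensity \<Lambda>) B \<le> FM \<Lambda> B"
  unfolding mark_intensity_FM emeasure_measure_of_conv by auto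

lemma sets_bern_PiM: "sets (PiM UNIV (\<lambda>_::nat. measure_pmf (bernoulli_pmf x))) = sets mark_space"
  unfolding mark_space_def by (rule sets_PiM_cong) auto

lemma bern_pair:
  assumes x: "0 \<le> x" "x \<le> 1" and ab: "a \<noteq> b"
  shows "emeasure (PiM UNIV (\<lambda>_::nat. measure_pmf (bernoulli_pmf x))) {\<omega>. \<omega> a \<and> \<omega> b} = ennreal (x * x)"
proof -
  interpret product_prob_space "\<lambda>_::nat. measure_pmf (bernoulli_pmf x)" UNIV
    by (rule product_prob_spaceI) (rule prob_space_measure_pmf)
  have "{\<omega>. \<omega> a \<and> \<omega> b} = {\<omega>\<in>space (PiM UNIV (\<lambda>_::nat. measure_pmf (bernoulli_pmf x))). \<forall>i\<in>{a,b}. \<omega> i \<in> {True}}"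
    by (auto simp: space_PiM)
  also have "emeasure (PiM UNIV (\<lambda>_::nat. measure_pmf (bernoulli_pmf x))) \<dots> =
      (\<Prod>i\<in>{a,b}. emeasure (measure_pmf (bernoulli_pmf x)) {True})"
    by (rule emeasure_PiM_Collect) auto
  also have "\<dots> = ennreal x * ennreal x" using ab x by (simp add: emeasure_pmf_single)
  finally show ?thesis using x by (simp add: ennreal_mult)
qed

lemma Rset_sub_pairs: "Rset J \<subseteq> (\<Union>p\<in>{p\<in>{1..J}\<times>{1..J}. fst p < snd p}. {\<omega>. \<omega> (fst p) \<and> \<omega> (snd p)})"
proof
  fix \<omega> assume "\<omega> \<in> Rset J"
  then have c: "2 \<le> card (participants \<omega> \<inter> {1..J})" by (simp add: Rset_def)
  have fin: "finite (participants \<omega> \<inter> {1..J})" by simp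
  have "participants \<omega> \<inter> {1..J} \<noteq> {}" using c by auto
  then obtain u where u: "u \<in> participants \<omega> \<inter> {1..J}" by blast
  have "card (participants \<omega> \<inter> {1..J} - {u}) = card (participants \<omega> \<inter> {1..J}) - 1"
    using u fin by (simp add: card_Diff_singleton)
  then have "1 \<le> card (participants \<omega> \<inter> {1..J} - {u})" using c by linarith
  then have "participants \<omega> \<inter> {1..J} - {u} \<noteq> {}" by (metis card.empty not_one_le_zero)
  then obtain v where v: "v \<in> participants \<omega> \<inter> {1..J}" "u \<noteq> v" by blast
  have uv: "\<omega> u" "\<omega> v" "u \<in> {1..J}" "v \<in> {1..J}" using u v by (auto simp: participants_def)
  show "\<omega> \<in> (\<Union>p\<in>{p\<in>{1..J}\<times>{1..J}. fst p < snd p}. {\<omega>. \<omega> (fst p) \<and> \<omega> (snd p)})"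
  proof (cases "u < v")
    case True
    then have "(u,v) \<in> {p\<in>{1..J}\<times>{1..J}. fst p < snd p}" "\<omega> \<in> {\<omega>. \<omega> (fst (u,v)) \<and> \<omega> (snd (u,v))}"
      using uv by auto
    then show ?thesis by blast
  next
    case False then have "v < u" using v(2) by simp
    then have "(v,u) \<in> {p\<in>{1..J}\<times>{1..J}. fst p < snd p}" "\<omega> \<in> {\<omega>. \<omega> (fst (v,u)) \<and> \<omega> (snd (v,u))}"
      using uv by auto
    then show ?thesis by blast
  qed
qed

lemma bern_Rset:
  assumes x: "0 < x" "x \<le> 1"
  shows "emeasure (PiM UNIV (\<lambda>_::nat. measure_pmf (bernoulli_pmf x))) (Rset J) \<le> ennreal (real (J * J) * (x * x))"
proof -
  let ?P = "PiM UNIV (\<lambda>_::nat. measure_pmf (bernoulli_pmf x))"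
  let ?I = "{p\<in>{1..J}\<times>{1..J}. fst p < snd p}"
  let ?A = "\<lambda>p::nat\<times>nat. {\<omega>. \<omega> (fst p) \<and> \<omega> (snd p)}"
  have fI: "finite ?I" by (rule finite_subset[of _ "{1..J}\<times>{1..J}"]) auto
  have Asets: "?A p \<in> sets ?P" for p
  proof -
    have "?A p = {b\<in>space mark_space. \<forall>k\<in>{fst p, snd p}. b k \<in> {True}}"
      by (auto simp: space_mark_space)
    also have "\<dots> \<in> sets mark_space" by (rule coord_sets) simp
    finally show ?thesis by (simp add: sets_bern_PiM)
  qed
  have "emeasure ?P (Rset J) \<le> emeasure ?P (\<Union>p\<in>?I. ?A p)"
    by (rule emeasure_mono[OF Rset_sub_pairs]) (use fI Asets in auto)
  also have "\<dots> \<le> (\<Sum>p\<in>?I. emeasure ?P (?A p))"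
    by (rule emeasure_subadditive_finite[OF fI]) (use Asets in auto)
  also have "\<dots> = (\<Sum>p\<in>?I. ennreal (x * x))"
    by (rule sum.cong) (use x bern_pair in auto)
  also have "\<dots> = of_nat (card ?I) * ennreal (x * x)" by simp
  also have "\<dots> \<le> of_nat (J * J) * ennreal (x * x)"
  proof -
    have "card ?I \<le> card ({1..J}\<times>{1..J})" by (rule card_mono) auto
    then have "card ?I \<le> J * J" by (simp add: card_cartesian_product)
    then have "(of_nat (card ?I) :: ennreal) \<le> of_nat (J * J)" by (rule of_nat_mono)
    then show ?thesis by (rule mult_right_mono) simp
  qed
  also have "\<dots> = ennreal (real (J * J) * (x * x))" using x by (simp add: ennreal_mult ennreal_of_nat_eq_real_of_nat)
  finally show ?thesis .
qed


definition evc :: "real measure \<Rightarrow> ennreal" where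
  "evc \<Lambda> = (if measure_space (space (restrict_space lborel {0::real..}) \<times> space (mark_intensity \<Lambda>))
      (sigma_sets (space (restrict_space lborel {0::real..}) \<times> space (mark_intensity \<Lambda>))
         {a \<times> b |a b. a \<in> sets (restrict_space lborel {0::real..}) \<and> b \<in> sets (mark_intensity \<Lambda>)})
      (\<lambda>X. \<integral>\<^sup>+x. (\<integral>\<^sup>+y. indicator X (x,y) \<partial>mark_intensity \<Lambda>) \<partial>restrict_space lborel {0::real..})
    then 1 else 0)"

lemma evc_le1: "evc \<Lambda> \<le> 1" by (simp add: evc_def)

lemma Ev_times:
  assumes I: "I \<in> sets borel" "I \<subseteq> {0..}" and B: "B \<in> sets mark_space"
  shows "I \<times> B \<in> sets (event_intensity \<Lambda>)"
    "emeasure (event_intensity \<Lambda>) (I \<times> B) = evc \<Lambda> * (emeasure lborel I * emeasure (mark_intensity \<Lambda>) B)"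
proof -
  let ?R = "restrict_space lborel {0::real..}"
  let ?K = "mark_intensity \<Lambda>"
  have IR: "I \<in> sets ?R" using I by (subst sets_restrict_space_iff) auto
  have BK: "B \<in> sets ?K" using B by (simp add: sets_mark_intensity)
  show "I \<times> B \<in> sets (event_intensity \<Lambda>)"
    unfolding event_intensity_def using IR BK by (rule pair_measureI)
  have inner: "(\<integral>\<^sup>+y. indicator (I \<times> B) (x,y) \<partial>?K) = emeasure ?K B * indicator I x" for x
  proof -
    have "(\<integral>\<^sup>+y. indicator (I \<times> B) (x,y) \<partial>?K) = (\<integral>\<^sup>+y. indicator I x * indicator B y \<partial>?K)"
      by (rule nn_integral_cong) (simp add: indicator_def)
    also have "\<dots> = indicator I x * emeasure ?K B" by (rule nn_integral_cmult_indicator[OF BK])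
    finally show ?thesis by (simp add: mult.commute)
  qed
  have dbl: "(\<integral>\<^sup>+x. (\<integral>\<^sup>+y. indicator (I \<times> B) (x,y) \<partial>?K) \<partial>?R) = emeasure lborel I * emeasure ?K B"
  proof -
    have "(\<integral>\<^sup>+x. (\<integral>\<^sup>+y. indicator (I \<times> B) (x,y) \<partial>?K) \<partial>?R) = (\<integral>\<^sup>+x. emeasure ?K B * indicator I x \<partial>?R)"
      using inner by simp
    also have "\<dots> = emeasure ?K B * emeasure ?R I" by (rule nn_integral_cmult_indicator[OF IR])
    also have "emeasure ?R I = emeasure lborel I" by (rule emeasure_restrict_space) (use I in auto)
    finally show ?thesis by (simp add: mult.commute)
  qed
  have gen: "I \<times> B \<in> sigma_sets (space ?R \<times> space ?K) {a \<times> b |a b. a \<in> sets ?R \<and> b \<in> sets ?K}"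
    using IR BK by (intro sigma_sets.Basic) blast
  show "emeasure (event_intensity \<Lambda>) (I \<times> B) = evc \<Lambda> * (emeasure lborel I * emeasure (mark_intensity \<Lambda>) B)"
    unfolding event_intensity_def pair_measure_def emeasure_measure_of_conv
    using gen dbl by (simp add: evc_def)
qed

lemma cellT_eq: "cellT a h i = {a + real i * h <.. a + real (Suc i) * h}"
  by (auto simp: cellT_def)

lemma cellT_borel: "cellT a h i \<in> sets borel" by (simp add: cellT_eq)

lemma cellT_len: "0 \<le> h \<Longrightarrow> emeasure lborel (cellT a h i) = ennreal h"
proof -
  assume h: "0 \<le> h"
  have "a + real i * h \<le> a + real (Suc i) * h" using h by (simp add: algebra_simps)
  then show ?thesis by (simp add: cellT_eq algebra_simps)
qed

lemma cellT_pos: "0 \<le> a \<Longrightarrow> 0 \<le> h \<Longrightarrow> cellT a h i \<subseteq> {0..}"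
  by (auto simp: cellT_def) (smt (verit) mult_nonneg_nonneg of_nat_0_le_iff)

lemma FM_Rset_finite:
  assumes fin: "finite_measure \<Lambda>"
  shows "FM \<Lambda> (Rset J) < \<infinity>"
proof -
  let ?S = "{(i::nat, j::nat). 1 \<le> i \<and> i < j \<and> (\<lambda>k. k = i \<or> k = j) \<in> Rset J}"
  have Ssub: "?S \<subseteq> {0..J} \<times> {0..J}"
  proof
    fix p assume "p \<in> ?S"
    then obtain i j where p: "p = (i,j)" "1 \<le> i" "i < j" "(\<lambda>k. k = i \<or> k = j) \<in> Rset J" by auto
    have "j \<le> J"
    proof (rule ccontr)
      assume "\<not> j \<le> J"
      then have "participants (\<lambda>k. k = i \<or> k = j) \<inter> {1..J} \<subseteq> {i}" by (auto simp: participants_def)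
      then have "card (participants (\<lambda>k. k = i \<or> k = j) \<inter> {1..J}) \<le> card {i}"
        by (intro card_mono) simp_all
      then show False using p(4) by (simp add: Rset_def)
    qed
    then show "p \<in> {0..J} \<times> {0..J}" using p by auto
  qed
  have fS: "finite ?S" by (rule finite_subset[OF Ssub]) simp
  have c1: "emeasure (count_space UNIV) ?S < \<infinity>" using fS by (simp add: of_nat_less_top)
  have c0: "emeasure \<Lambda> {0} < \<infinity>" using finite_measure.emeasure_finite[OF fin] by (simp add: top.not_eq_extremum)
  have p1: "emeasure \<Lambda> {0} * emeasure (count_space UNIV) ?S < \<infinity>" using c0 c1 by (simp add: ennreal_mult_less_top)
  have pw: "ennreal (1 / x\<^sup>2) * emeasure (PiM UNIV (\<lambda>_::nat. measure_pmf (bernoulli_pmf x))) (Rset J) * indicator {0<..1} x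
      \<le> ennreal (real (J * J))" for x
  proof (cases "x \<in> {0<..1}")
    case True
    then have x: "0 < x" "x \<le> 1" by auto
    have "ennreal (1 / x\<^sup>2) * emeasure (PiM UNIV (\<lambda>_::nat. measure_pmf (bernoulli_pmf x))) (Rset J)
        \<le> ennreal (1 / x\<^sup>2) * ennreal (real (J * J) * (x * x))"
      by (rule mult_left_mono[OF bern_Rset[OF x]]) simp
    also have "\<dots> = ennreal (1 / x\<^sup>2 * (real (J * J) * (x * x)))"
      by (rule ennreal_mult[symmetric]) (use x in simp_all)
    also have "1 / x\<^sup>2 * (real (J * J) * (x * x)) = real (J * J)" using x by (simp add: power2_eq_square field_simps)
    finally show ?thesis using True by simp
  next
    case False then show ?thesis by simp
  qed
  have p2: "(\<integral>\<^sup>+x\<in>{0<..1}. ennreal (1 / x\<^sup>2) * emeasure (PiM UNIV (\<lambda>_::nat. measure_pmf (bernoulli_pmf x))) (Rset J) \<partial>\<Lambda>)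
      \<le> (\<integral>\<^sup>+x. ennreal (real (J * J)) \<partial>\<Lambda>)"
    by (rule nn_integral_mono) (rule pw)
  also have "\<dots> = ennreal (real (J * J)) * emeasure \<Lambda> (space \<Lambda>)" by simp
  also have "\<dots> < \<infinity>" using finite_measure.emeasure_finite[OF fin, of "space \<Lambda>"]
    by (simp add: ennreal_mult_less_top top.not_eq_extremum)
  finally have p2': "(\<integral>\<^sup>+x\<in>{0<..1}. ennreal (1 / x\<^sup>2) * emeasure (PiM UNIV (\<lambda>_::nat. measure_pmf (bernoulli_pmf x))) (Rset J) \<partial>\<Lambda>) < \<infinity>" .
  show ?thesis unfolding FM_def using p1 p2' by (simp add: ennreal_add_less_top)
qed

lemma Ev_finite:
  assumes fin: "finite_measure \<Lambda>" and I: "I \<in> sets borel" "I \<subseteq> {0..}" "emeasure lborel I < \<infinity>"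
    and B: "B \<in> sets mark_space" "B \<subseteq> Rset J"
  shows "emeasure (event_intensity \<Lambda>) (I \<times> B) < \<infinity>"
proof -
  have "emeasure (mark_intensity \<Lambda>) B \<le> emeasure (mark_intensity \<Lambda>) (Rset J)"
    by (rule emeasure_mono[OF B(2)]) (simp add: sets_mark_intensity Rset_sets)
  also have "\<dots> \<le> FM \<Lambda> (Rset J)" by (rule emeasure_mark_le)
  finally have mB: "emeasure (mark_intensity \<Lambda>) B < \<infinity>" using FM_Rset_finite[OF fin] by (simp add: le_less_trans)
  have ev: "evc \<Lambda> < \<infinity>" using evc_le1[of \<Lambda>] by (rule le_less_trans) simp
  have "evc \<Lambda> * (emeasure lborel I * emeasure (mark_intensity \<Lambda>) B) < \<infinity>"
    using mB I(3) ev by (simp add: ennreal_mult_less_top)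
  then show ?thesis using Ev_times(2)[OF I(1,2) B(1)] by simp
qed

lemma ppp_facts:
  assumes P: "poisson_point_process M Xi mu" and A: "A \<in> sets mu" "emeasure mu A < \<infinity>"
  shows "prob_space M" "AE \<omega> in M. finite (Xi \<omega> \<inter> A)"
    "(\<lambda>\<omega>. card (Xi \<omega> \<inter> A)) \<in> measurable M (count_space UNIV)"
    "\<And>k. measure M {\<omega>\<in>space M. card (Xi \<omega> \<inter> A) = k} =
        (enn2real (emeasure mu A)) ^ k / fact k * exp (- enn2real (emeasure mu A))"
  using P A unfolding poisson_point_process_def by auto

lemma count_set_sets:
  assumes "f \<in> measurable M (count_space UNIV)"
  shows "{\<omega>\<in>space M. f \<omega> \<in> S} \<in> sets M"
proof -
  have "{\<omega>\<in>space M. f \<omega> \<in> S} = f -` S \<inter> space M" by auto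
  also have "\<dots> \<in> sets M" by (rule measurable_sets[OF assms]) simp
  finally show ?thesis .
qed

lemma ppp_ge2:
  assumes P: "poisson_point_process M Xi mu" and A: "A \<in> sets mu" "emeasure mu A < \<infinity>"
  shows "measure M {\<omega>\<in>space M. 2 \<le> card (Xi \<omega> \<inter> A)} \<le> (enn2real (emeasure mu A))\<^sup>2"
proof -
  note F = ppp_facts[OF P A]
  interpret prob_space M by (rule F(1))
  define \<mu> where "\<mu> = enn2real (emeasure mu A)"
  have \<mu>0: "0 \<le> \<mu>" by (simp add: \<mu>_def)
  let ?C = "\<lambda>k. {\<omega>\<in>space M. card (Xi \<omega> \<inter> A) = k}"
  have Cs: "?C k \<in> sets M" for k using count_set_sets[OF F(3), of "{k}"] by simp
  have eq: "{\<omega>\<in>space M. 2 \<le> card (Xi \<omega> \<inter> A)} = space M - (?C 0 \<union> ?C 1)" by auto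
  have "measure M (space M - (?C 0 \<union> ?C 1)) = 1 - measure M (?C 0 \<union> ?C 1)"
    by (rule prob_compl) (use Cs in auto)
  also have "measure M (?C 0 \<union> ?C 1) = measure M (?C 0) + measure M (?C 1)"
    by (rule finite_measure_Union) (use Cs in auto)
  also have "measure M (?C 0) = exp (- \<mu>)" using F(4)[of 0] by (simp add: \<mu>_def)
  also have "measure M (?C 1) = \<mu> * exp (- \<mu>)" using F(4)[of 1] by (simp add: \<mu>_def)
  finally have m: "measure M {\<omega>\<in>space M. 2 \<le> card (Xi \<omega> \<inter> A)} = 1 - (exp (- \<mu>) + \<mu> * exp (- \<mu>))"
    using eq by simp
  have e: "1 - \<mu> \<le> exp (- \<mu>)" using exp_ge_add_one_self[of "- \<mu>"] by simp
  have "(1 + \<mu>) * (1 - \<mu>) \<le> (1 + \<mu>) * exp (- \<mu>)" by (rule mult_left_mono[OF e]) (use \<mu>0 in simp)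
  then have "1 - \<mu>\<^sup>2 \<le> exp (- \<mu>) + \<mu> * exp (- \<mu>)" by (simp add: algebra_simps power2_eq_square)
  then show ?thesis using m by (simp add: \<mu>_def)
qed

lemma law_eq:
  fixes A A' :: "'i \<Rightarrow> 'e set"
  assumes P: "poisson_point_process M Xi mu" and I: "finite I"
    and A: "\<And>i. i \<in> I \<Longrightarrow> A i \<in> sets mu \<and> emeasure mu (A i) < \<infinity>"
    and A': "\<And>i. i \<in> I \<Longrightarrow> A' i \<in> sets mu \<and> emeasure mu (A' i) < \<infinity>"
    and dA: "disjoint_family_on A I" and dA': "disjoint_family_on A' I"
    and eq: "\<And>i. i \<in> I \<Longrightarrow> emeasure mu (A i) = emeasure mu (A' i)"
  shows "measure M {\<omega>\<in>space M. (\<lambda>i\<in>I. card (Xi \<omega> \<inter> A i)) \<in> Q} =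
         measure M {\<omega>\<in>space M. (\<lambda>i\<in>I. card (Xi \<omega> \<inter> A' i)) \<in> Q}"
proof (cases "I = {}")
  case True
  have r: "(\<lambda>i\<in>I. card (Xi \<omega> \<inter> A i)) = (\<lambda>i\<in>I. card (Xi \<omega> \<inter> A' i))" for \<omega>
    by (rule restrict_ext) (simp add: True)
  show ?thesis unfolding r ..
next
  case False
  interpret prob_space M using P by (simp add: poisson_point_process_def)
  define N where "N = card I"
  obtain h where h: "bij_betw h {0..<N} I" using ex_bij_betw_nat_finite[OF I] unfolding N_def by blast
  have hN: "\<And>n. n < N \<Longrightarrow> h n \<in> I" using h by (auto dest: bij_betwE)
  have hinj: "inj_on h {..<N}" using h by (simp add: bij_betw_def atLeast0LessThan)
  define g where "g = inv_into {..<N} h"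
  have himg: "h ` {..<N} = I" using h by (simp add: bij_betw_def atLeast0LessThan)
  have g: "\<And>i. i \<in> I \<Longrightarrow> g i < N \<and> h (g i) = i"
    unfolding g_def using himg by (metis f_inv_into_f inv_into_into lessThan_iff)
  have "0 < N" using False I by (simp add: N_def card_gt_0_iff)
  then have N0: "{..<N} \<noteq> {}" by auto
  let ?P = "PiM {..<N} (\<lambda>_. count_space (UNIV::nat set))"
  have rv: "\<And>B n. n < N \<Longrightarrow> (\<And>i. i \<in> I \<Longrightarrow> B i \<in> sets mu \<and> emeasure mu (B i) < \<infinity>) \<Longrightarrow>
      (\<lambda>\<omega>. card (Xi \<omega> \<inter> B (h n))) \<in> measurable M (count_space UNIV)"
    using hN ppp_facts(3)[OF P] by blast
  have distrV: "distr M ?P (\<lambda>\<omega>. \<lambda>n\<in>{..<N}. card (Xi \<omega> \<inter> B (h n))) =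
      PiM {..<N} (\<lambda>n. distr M (count_space UNIV) (\<lambda>\<omega>. card (Xi \<omega> \<inter> B (h n))))"
    if B: "\<And>i. i \<in> I \<Longrightarrow> B i \<in> sets mu \<and> emeasure mu (B i) < \<infinity>" and dB: "disjoint_family_on B I" for B
  proof -
    have dBh: "disjoint_family_on (\<lambda>n. B (h n)) {..<N}"
      unfolding disjoint_family_on_def
    proof (intro ballI impI)
      fix m n assume mn: "m \<in> {..<N}" "n \<in> {..<N}" "m \<noteq> n"
      then have "h m \<noteq> h n" using hinj by (meson inj_onD)
      then show "B (h m) \<inter> B (h n) = {}" using dB hN mn unfolding disjoint_family_on_def by auto
    qed
    have "indep_vars (\<lambda>_. count_space UNIV) (\<lambda>i \<omega>. card (Xi \<omega> \<inter> B (h i))) {..<N}"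
      using P[unfolded poisson_point_process_def] B hN dBh by auto
    then show ?thesis
      by (subst (asm) indep_vars_iff_distr_eq_PiM'[OF N0]) (use rv[OF _ B] in auto)
  qed
  have marg: "distr M (count_space UNIV) (\<lambda>\<omega>. card (Xi \<omega> \<inter> A (h n))) =
              distr M (count_space UNIV) (\<lambda>\<omega>. card (Xi \<omega> \<inter> A' (h n)))" if n: "n < N" for n
  proof (rule measure_eqI_countable[where A=UNIV])
    fix a :: nat
    have m1: "(\<lambda>\<omega>. card (Xi \<omega> \<inter> A (h n))) \<in> measurable M (count_space UNIV)" by (rule rv[OF n A])
    have m2: "(\<lambda>\<omega>. card (Xi \<omega> \<inter> A' (h n))) \<in> measurable M (count_space UNIV)" by (rule rv[OF n A'])
    have e1: "emeasure (distr M (count_space UNIV) (\<lambda>\<omega>. card (Xi \<omega> \<inter> A (h n)))) {a} =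
        ennreal (measure M {\<omega>\<in>space M. card (Xi \<omega> \<inter> A (h n)) = a})"
      using m1 by (subst emeasure_distr) (auto simp: emeasure_eq_measure vimage_def Int_def conj_commute)
    have e2: "emeasure (distr M (count_space UNIV) (\<lambda>\<omega>. card (Xi \<omega> \<inter> A' (h n)))) {a} =
        ennreal (measure M {\<omega>\<in>space M. card (Xi \<omega> \<inter> A' (h n)) = a})"
      using m2 by (subst emeasure_distr) (auto simp: emeasure_eq_measure vimage_def Int_def conj_commute)
    show "emeasure (distr M (count_space UNIV) (\<lambda>\<omega>. card (Xi \<omega> \<inter> A (h n)))) {a} =
        emeasure (distr M (count_space UNIV) (\<lambda>\<omega>. card (Xi \<omega> \<inter> A' (h n)))) {a}"
      unfolding e1 e2 using ppp_facts(4)[OF P, of "A (h n)" a] ppp_facts(4)[OF P, of "A' (h n)" a]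
        A[OF hN[OF n]] A'[OF hN[OF n]] eq[OF hN[OF n]] by simp
  qed auto
  define V where "V = (\<lambda>\<omega>. \<lambda>n\<in>{..<N}. card (Xi \<omega> \<inter> A (h n)))"
  define V' where "V' = (\<lambda>\<omega>. \<lambda>n\<in>{..<N}. card (Xi \<omega> \<inter> A' (h n)))"
  have d1: "distr M ?P V = PiM {..<N} (\<lambda>n. distr M (count_space UNIV) (\<lambda>\<omega>. card (Xi \<omega> \<inter> A (h n))))"
    unfolding V_def by (rule distrV[OF A dA])
  have d2: "distr M ?P V' = PiM {..<N} (\<lambda>n. distr M (count_space UNIV) (\<lambda>\<omega>. card (Xi \<omega> \<inter> A' (h n))))"
    unfolding V'_def by (rule distrV[OF A' dA'])
  have dVV: "distr M ?P V = distr M ?P V'"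
    unfolding d1 d2 by (rule PiM_cong) (use marg in auto)
  have Vm: "V \<in> measurable M ?P" unfolding V_def by (rule measurable_restrict) (use rv[OF _ A] in auto)
  have V'm: "V' \<in> measurable M ?P" unfolding V'_def by (rule measurable_restrict) (use rv[OF _ A'] in auto)
  define Q' where "Q' = {v\<in>space ?P. (\<lambda>i\<in>I. v (g i)) \<in> Q}"
  have Q's: "Q' \<in> sets ?P"
  proof (rule sets.countable)
    show "countable Q'"
      by (rule countable_subset[of _ "space ?P"]) (auto simp: Q'_def space_PiM intro!: countable_PiE)
    fix v assume "v \<in> Q'"
    then have v: "v \<in> Pi\<^sub>E {..<N} (\<lambda>_. UNIV)" by (simp add: Q'_def space_PiM)
    have "{v} = Pi\<^sub>E {..<N} (\<lambda>n. {v n})" using v by (simp add: PiE_singleton PiE_iff)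
    then show "{v} \<in> sets ?P" by simp
  qed
  have set1: "{\<omega>\<in>space M. (\<lambda>i\<in>I. card (Xi \<omega> \<inter> A i)) \<in> Q} = V -` Q' \<inter> space M"
  proof -
    have "(\<lambda>i\<in>I. card (Xi \<omega> \<inter> A i)) = (\<lambda>i\<in>I. V \<omega> (g i))" for \<omega>
      by (rule restrict_ext) (simp add: V_def g)
    moreover have "V \<omega> \<in> space ?P" for \<omega> by (simp add: V_def space_PiM)
    ultimately show ?thesis by (auto simp: Q'_def)
  qed
  have set2: "{\<omega>\<in>space M. (\<lambda>i\<in>I. card (Xi \<omega> \<inter> A' i)) \<in> Q} = V' -` Q' \<inter> space M"
  proof -
    have "(\<lambda>i\<in>I. card (Xi \<omega> \<inter> A' i)) = (\<lambda>i\<in>I. V' \<omega> (g i))" for \<omega>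
      by (rule restrict_ext) (simp add: V'_def g)
    moreover have "V' \<omega> \<in> space ?P" for \<omega> by (simp add: V'_def space_PiM)
    ultimately show ?thesis by (auto simp: Q'_def)
  qed
  show ?thesis
    unfolding set1 set2 using measure_distr[OF Vm Q's] measure_distr[OF V'm Q's] dVV by simp
qed

lemma cell_cover:
  assumes h: "0 < h" and t: "a < \<tau>" "\<tau> \<le> a + real M * h"
  shows "\<exists>i<M. \<tau> \<in> cellT a h i"
proof -
  define q where "q = (\<tau> - a) / h"
  have q0: "0 < q" using t h by (simp add: q_def)
  have qM: "q \<le> real M" unfolding q_def using t h by (simp add: pos_divide_le_eq)
  have ci: "real_of_int (ceiling q) - 1 < q" "q \<le> real_of_int (ceiling q)" using ceiling_correct[of q] by auto
  have c1i: "1 \<le> ceiling q" using q0 by simp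
  define c where "c = nat (ceiling q)"
  have rc: "real c = real_of_int (ceiling q)" using c1i by (simp add: c_def)
  have "nat 1 \<le> nat (ceiling q)" using c1i by (rule nat_mono)
  then have c1: "1 \<le> c" by (simp add: c_def)
  have "ceiling q \<le> int M" by (rule ceiling_le) (use qM in simp)
  then have cM: "c \<le> M" using qM by (simp add: c_def)
  define i where "i = c - 1"
  have ic: "real i = real c - 1" "real (Suc i) = real c" using c1 by (simp_all add: i_def of_nat_diff)
  have "real i < (\<tau> - a) / h" using ci(1) rc ic by (simp add: q_def)
  then have l: "real i * h < \<tau> - a" using h by (simp add: pos_less_divide_eq)
  have "(\<tau> - a) / h \<le> real (Suc i)" using ci(2) rc ic by (simp add: q_def)
  then have u: "\<tau> - a \<le> real (Suc i) * h" using h by (simp add: pos_divide_le_eq)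
  have "\<tau> \<in> cellT a h i" using l u by (simp add: cellT_def)
  moreover have "i < M" using cM c1 by (simp add: i_def)
  ultimately show ?thesis by blast
qed

lemma cell_sub_window:
  assumes "0 < h" "i < M"
  shows "cellT a h i \<subseteq> {\<tau>. a < \<tau> \<and> \<tau> \<le> a + real M * h}"
proof
  fix \<tau> assume "\<tau> \<in> cellT a h i"
  then have t: "a + real i * h < \<tau>" "\<tau> \<le> a + real (Suc i) * h" by (auto simp: cellT_def)
  have "0 \<le> real i * h" using assms by simp
  moreover have "real (Suc i) * h \<le> real M * h" using assms by (intro mult_right_mono) auto
  ultimately show "\<tau> \<in> {\<tau>. a < \<tau> \<and> \<tau> \<le> a + real M * h}" using t by auto
qed

lemma window_inj:
  assumes h: "0 < h"
    and E: "E \<subseteq> {\<tau>. a < \<tau> \<and> \<tau> \<le> a + real M * h} \<times> Rset J"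
    and fin: "finite E"
    and one: "\<forall>i<M. card (E \<inter> (cellT a h i \<times> Rset J)) \<le> 1"
  shows "inj_on fst E"
proof (rule inj_onI)
  fix x y assume xy: "x \<in> E" "y \<in> E" "fst x = fst y"
  have "fst x \<in> {\<tau>. a < \<tau> \<and> \<tau> \<le> a + real M * h}" using E xy(1) by (auto simp: mem_Times_iff)
  then obtain i where i: "i < M" "fst x \<in> cellT a h i" using cell_cover[OF h] by blast
  have "x \<in> E \<inter> (cellT a h i \<times> Rset J)" "y \<in> E \<inter> (cellT a h i \<times> Rset J)"
    using xy i E by (auto simp: mem_Times_iff)
  moreover have "card (E \<inter> (cellT a h i \<times> Rset J)) \<le> 1" using one i(1) by blast
  moreover have "finite (E \<inter> (cellT a h i \<times> Rset J))" using fin by simp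
  ultimately show "x = y" using card_le_Suc0_iff_eq[of "E \<inter> (cellT a h i \<times> Rset J)"] by auto
qed

lemma rel_mono: "j \<le> J \<Longrightarrow> relevant j e \<Longrightarrow> relevant J e"
proof -
  assume jJ: "j \<le> J" and r: "relevant j e"
  have "card (participants (snd e) \<inter> {1..j}) \<le> card (participants (snd e) \<inter> {1..J})"
    by (rule card_mono) (use jJ in auto)
  then show ?thesis using r by (simp add: relevant_def)
qed

definition Aset :: "event set \<Rightarrow> real \<Rightarrow> real \<Rightarrow> nat \<Rightarrow> nat set" where
  "Aset X r s J = {ancestor_level X r s j | j. 1 \<le> j \<and> j \<le> J}"

lemma anc_cells:
  assumes h: "0 < h" and s: "s = r + real M * h"
    and fin: "finite (X \<inter> ({\<tau>. r < \<tau> \<and> \<tau> \<le> s} \<times> Rset J))"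
    and one: "\<forall>i<M. card (X \<inter> (cellT r h i \<times> Rset J)) \<le> 1"
  shows "Aset X r s J = phiL J (\<lambda>(i,S). card (X \<inter> (cellT r h i \<times> markset J S))) M ` {1..J}"
proof -
  define E where "E = X \<inter> ({\<tau>. r < \<tau> \<and> \<tau> \<le> s} \<times> Rset J)"
  define y where "y = (\<lambda>(i,S). card (X \<inter> (cellT r h i \<times> markset J S)))"
  have fE: "finite E" using fin by (simp add: E_def)
  have cellE: "E \<inter> (cellT r h i \<times> B) = X \<inter> (cellT r h i \<times> B)" if "i < M" "B \<subseteq> Rset J" for i B
    using cell_sub_window[OF h that(1), of r] that(2) s by (auto simp: E_def)
  have one': "\<forall>i<M. card (E \<inter> (cellT r h i \<times> Rset J)) \<le> 1" using one cellE by simp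
  have injE: "inj_on fst E" by (rule window_inj[OF h _ fE one']) (auto simp: E_def s)
  have oneU: "\<forall>i<M. card (E \<inter> (cellT r h i \<times> UNIV)) \<le> 1"
  proof (intro allI impI)
    fix i assume "i < M"
    have "E \<inter> (cellT r h i \<times> UNIV) = E \<inter> (cellT r h i \<times> Rset J)" by (auto simp: E_def)
    then show "card (E \<inter> (cellT r h i \<times> UNIV)) \<le> 1" using one' \<open>i < M\<close> by simp
  qed
  have yE: "\<forall>i<M. \<forall>S\<in>letters J. y (i,S) = card (E \<inter> (cellT r h i \<times> markset J S))"
    using cellE markset_sub_Rset by (simp add: y_def)
  have relE: "\<forall>e\<in>E. relevant J e" by (auto simp: E_def relevant_Rset)
  have winE: "\<forall>e\<in>E. r < fst e \<and> fst e \<le> r + real M * h" by (auto simp: E_def s)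
  have EM: "{e\<in>E. fst e \<le> r + real M * h} = E" using winE by auto
  have cd: "comp_desc (card E) E k = phiL J y M k" if "k \<le> J" for k
    using cell_desc[OF fE injE winE relE oneU yE less_imp_le[OF h] order_refl that] EM by simp
  have al: "ancestor_level X r s j = phiL J y M j" if "1 \<le> j" "j \<le> J" for j
  proof -
    have Ej: "{e\<in>X. r < fst e \<and> fst e \<le> s \<and> relevant j e} = {e\<in>E. relevant j e}"
      using rel_mono[OF that(2)] by (auto simp: E_def relevant_Rset)
    have "ancestor_level X r s j = comp_desc (card {e\<in>E. relevant j e}) {e\<in>E. relevant j e} j"
      unfolding ancestor_level_def Let_def Ej using fE by simp
    also have "\<dots> = comp_desc (card E) E j" by (rule comp_desc_rel[symmetric, OF fE injE order_refl])
    also have "\<dots> = phiL J y M j" by (rule cd[OF that(2)])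
    finally show ?thesis .
  qed
  have "Aset X r s J = (\<lambda>j. ancestor_level X r s j) ` {1..J}" by (auto simp: Aset_def)
  also have "\<dots> = phiL J y M ` {1..J}" by (rule image_cong) (use al in auto)
  finally show ?thesis by (simp add: y_def)
qed

lemma Aset_mono: "J \<le> J' \<Longrightarrow> Aset X r s J \<subseteq> Aset X r s J'"
  by (auto simp: Aset_def)

lemma Aset_finite: "finite (Aset X r s J)"
proof -
  have "Aset X r s J = (\<lambda>j. ancestor_level X r s j) ` {1..J}" by (auto simp: Aset_def)
  then show ?thesis by simp
qed

lemma N_bad:
  assumes "\<not> N_nk_less X n k c"
  shows "\<exists>J. \<forall>J'\<ge>J. c \<le> real (card (Aset X ((real k - 1) / 2 ^ n) (real k / 2 ^ n) J'))"
proof -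
  let ?r = "(real k - 1) / 2 ^ n" and ?s = "real k / 2 ^ n"
  let ?A = "ancestors X ?r ?s"
  have "\<exists>F. finite F \<and> F \<subseteq> ?A \<and> c \<le> real (card F)"
  proof (cases "finite ?A")
    case True
    then have "c \<le> real (card ?A)" using assms by (simp add: N_nk_less_def Let_def)
    then show ?thesis using True by blast
  next
    case False
    obtain F where F: "F \<subseteq> ?A" "finite F" "card F = nat (ceiling c)"
      using infinite_arbitrarily_large[OF False] by blast
    have "c \<le> real (nat (ceiling c))" by linarith
    then have "c \<le> real (card F)" using F(3) by simp
    then show ?thesis using F(1,2) by blast
  qed
  then obtain F where F: "finite F" "F \<subseteq> ?A" "c \<le> real (card F)" by blast
  have "\<forall>x\<in>F. \<exists>j. 1 \<le> j \<and> x = ancestor_level X ?r ?s j" using F(2) by (auto simp: ancestors_def)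
  then have "\<exists>jf. \<forall>x\<in>F. 1 \<le> jf x \<and> x = ancestor_level X ?r ?s (jf x)" by (rule bchoice)
  then obtain jf where jf: "\<forall>x\<in>F. 1 \<le> jf x \<and> x = ancestor_level X ?r ?s (jf x)" by blast
  define J where "J = Max (insert 0 (jf ` F))"
  have "F \<subseteq> Aset X ?r ?s J"
  proof
    fix x assume "x \<in> F"
    then have "jf x \<le> J" using F(1) by (simp add: J_def)
    then show "x \<in> Aset X ?r ?s J" using jf \<open>x \<in> F\<close> by (auto simp: Aset_def)
  qed
  then have "\<forall>J'\<ge>J. F \<subseteq> Aset X ?r ?s J'" using Aset_mono by blast
  then have cF: "\<forall>J'\<ge>J. card F \<le> card (Aset X ?r ?s J')" using Aset_finite card_mono by blast
  have "\<forall>J'\<ge>J. c \<le> real (card (Aset X ?r ?s J'))"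
  proof (intro allI impI)
    fix J' assume "J \<le> J'"
    then have "real (card F) \<le> real (card (Aset X ?r ?s J'))" using cF by simp
    then show "c \<le> real (card (Aset X ?r ?s J'))" using F(3) by linarith
  qed
  then show ?thesis by blast
qed

lemma coal_cells:
  assumes h: "0 < h" and t: "t = real M * h"
    and fin: "finite (X \<inter> ({\<tau>. 0 \<le> \<tau> \<and> \<tau> \<le> t} \<times> Rset J))"
    and nz: "X \<inter> ({0} \<times> Rset J) = {}"
    and one: "\<forall>i<M. card (X \<inter> (cellT 0 h i \<times> Rset J)) \<le> 1"
  shows "block_rank X t ` {1..J} = psiC J (\<lambda>(i,S). card (X \<inter> (cellT 0 h i \<times> markset J S))) M ` {1..J}"
    "\<And>t'. 0 \<le> t' \<Longrightarrow> t' \<le> t \<Longrightarrow> card (block_rank X t ` {1..J}) \<le> card (block_rank X t' ` {1..J})"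
proof -
  define E where "E = X \<inter> ({\<tau>. 0 < \<tau> \<and> \<tau> \<le> t} \<times> Rset J)"
  define y where "y = (\<lambda>(i,S). card (X \<inter> (cellT 0 h i \<times> markset J S)))"
  have E0: "X \<inter> ({\<tau>. 0 \<le> \<tau> \<and> \<tau> \<le> t} \<times> Rset J) = E"
  proof (intro equalityI subsetI)
    fix e assume e: "e \<in> X \<inter> ({\<tau>. 0 \<le> \<tau> \<and> \<tau> \<le> t} \<times> Rset J)"
    then have "e \<notin> X \<inter> ({0} \<times> Rset J)" using nz by blast
    then have "fst e \<noteq> 0" using e by (auto simp: mem_Times_iff)
    then show "e \<in> E" using e by (auto simp: E_def mem_Times_iff)
  qed (auto simp: E_def)
  have fE: "finite E" using fin E0 by simp
  have cellE: "E \<inter> (cellT 0 h i \<times> B) = X \<inter> (cellT 0 h i \<times> B)" if "i < M" "B \<subseteq> Rset J" for i B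
    using cell_sub_window[OF h that(1), of 0] that(2) t by (auto simp: E_def)
  have one': "\<forall>i<M. card (E \<inter> (cellT 0 h i \<times> Rset J)) \<le> 1" using one cellE by simp
  have injE: "inj_on fst E" by (rule window_inj[OF h _ fE one']) (auto simp: E_def t)
  have oneU: "\<forall>i<M. card (E \<inter> (cellT 0 h i \<times> UNIV)) \<le> 1"
  proof (intro allI impI)
    fix i assume "i < M"
    have "E \<inter> (cellT 0 h i \<times> UNIV) = E \<inter> (cellT 0 h i \<times> Rset J)" by (auto simp: E_def)
    then show "card (E \<inter> (cellT 0 h i \<times> UNIV)) \<le> 1" using one' \<open>i < M\<close> by simp
  qed
  have yE: "\<forall>i<M. \<forall>S\<in>letters J. y (i,S) = card (E \<inter> (cellT 0 h i \<times> markset J S))"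
    using cellE markset_sub_Rset by (simp add: y_def)
  have relE: "\<forall>e\<in>E. relevant J e" by (auto simp: E_def relevant_Rset)
  have winE: "\<forall>e\<in>E. 0 < fst e \<and> fst e \<le> 0 + real M * h" by (auto simp: E_def t)
  have EM: "{e\<in>E. fst e \<le> 0 + real M * h} = E" using winE by auto
  have ca: "comp_asc (card E) E k = psiC J y M k" if "k \<le> J" for k
    using cell_asc[OF fE injE winE relE oneU yE less_imp_le[OF h] order_refl that] EM by simp
  have br: "block_rank X t' j = comp_asc (card {e\<in>E. fst e \<le> t'}) {e\<in>E. fst e \<le> t'} j"
    if "1 \<le> j" "j \<le> J" "0 \<le> t'" "t' \<le> t" for j t'
  proof -
    let ?E' = "{e\<in>E. fst e \<le> t'}"
    have Ej: "{e\<in>X. 0 \<le> fst e \<and> fst e \<le> t' \<and> relevant j e} = {e\<in>?E'. relevant j e}"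
    proof (intro equalityI subsetI)
      fix e assume e: "e \<in> {e\<in>X. 0 \<le> fst e \<and> fst e \<le> t' \<and> relevant j e}"
      then have "relevant J e" using rel_mono[OF that(2)] by blast
      then have "e \<in> X \<inter> ({\<tau>. 0 \<le> \<tau> \<and> \<tau> \<le> t} \<times> Rset J)" using e that(4)
        by (auto simp: relevant_Rset mem_Times_iff)
      then have "e \<in> E" using E0 by blast
      then show "e \<in> {e\<in>?E'. relevant j e}" using e by blast
    next
      fix e assume e: "e \<in> {e\<in>?E'. relevant j e}"
      then show "e \<in> {e\<in>X. 0 \<le> fst e \<and> fst e \<le> t' \<and> relevant j e}" by (auto simp: E_def)
    qed
    have fE': "finite ?E'" using fE by simp
    have fE'': "finite {e\<in>?E'. relevant j e}" by (rule finite_subset[OF _ fE]) auto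
    have "block_rank X t' j = comp_asc (card {e\<in>?E'. relevant j e}) {e\<in>?E'. relevant j e} j"
      unfolding block_rank_def Let_def Ej using fE'' by (simp only: if_True)
    also have "\<dots> = comp_asc (card ?E') ?E' j"
      by (rule comp_asc_rel[symmetric, OF fE' inj_on_subset[OF injE] order_refl]) blast
    finally show ?thesis .
  qed
  have Et: "{e\<in>E. fst e \<le> t} = E" by (auto simp: E_def)
  show "block_rank X t ` {1..J} = psiC J y M ` {1..J}"
  proof -
    have "block_rank X t j = psiC J y M j" if "1 \<le> j" "j \<le> J" for j
    proof -
      have t0: "0 \<le> t" using h t by simp
      show ?thesis using br[OF that t0 order_refl] ca[OF that(2)] Et by simp
    qed
    then show ?thesis by (intro image_cong) auto
  qed
  fix t' assume t': "0 \<le> t'" "t' \<le> t"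
  let ?E1 = "{e\<in>E. fst e \<le> t'}" and ?E2 = "{e\<in>E. t' < fst e}"
  have split: "comp_asc (card E) E k = comp_asc (card ?E2) ?E2 (comp_asc (card ?E1) ?E1 k)" for k
    by (rule comp_asc_split[OF fE injE]) auto
  have "block_rank X t ` {1..J} = (comp_asc (card ?E2) ?E2) ` (block_rank X t' ` {1..J})"
  proof -
    have "block_rank X t j = comp_asc (card ?E2) ?E2 (block_rank X t' j)" if "1 \<le> j" "j \<le> J" for j
    proof -
      have t0: "0 \<le> t" using t' by linarith
      have "block_rank X t j = comp_asc (card E) E j" using br[OF that t0 order_refl] Et by simp
      also have "\<dots> = comp_asc (card ?E2) ?E2 (comp_asc (card ?E1) ?E1 j)" by (rule split)
      also have "comp_asc (card ?E1) ?E1 j = block_rank X t' j" using br[OF that t'] by simp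
      finally show ?thesis .
    qed
    then show ?thesis by (auto simp: image_image intro!: image_cong)
  qed
  then show "card (block_rank X t ` {1..J}) \<le> card (block_rank X t' ` {1..J})"
    by (simp add: card_image_le)
qed

lemma T_hit_ge:
  assumes h: "0 < h" and t: "t = real M * h"
    and fin: "finite (X \<inter> ({\<tau>. 0 \<le> \<tau> \<and> \<tau> \<le> t} \<times> Rset J))"
    and nz: "X \<inter> ({0} \<times> Rset J) = {}"
    and one: "\<forall>i<M. card (X \<inter> (cellT 0 h i \<times> Rset J)) \<le> 1"
    and big: "m < card (block_rank X t ` {1..J})"
  shows "ennreal t \<le> T_hit X m"
  unfolding T_hit_def
proof (rule Inf_greatest)
  fix x assume "x \<in> {ennreal t' |t'. 0 \<le> t' \<and> finite (coal_blocks X t') \<and> card (coal_blocks X t') \<le> m}"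
  then obtain t' where x: "x = ennreal t'" "0 \<le> t'" "finite (coal_blocks X t')" "card (coal_blocks X t') \<le> m" by blast
  show "ennreal t \<le> x"
  proof (rule ccontr)
    assume "\<not> ennreal t \<le> x"
    then have "\<not> t \<le> t'" using x(1) ennreal_leI by blast
    then have "t' < t" by linarith
    have "card (block_rank X t ` {1..J}) \<le> card (block_rank X t' ` {1..J})"
      by (rule coal_cells(2)[OF h t fin nz one x(2)]) (use \<open>t' < t\<close> in simp)
    also have "\<dots> \<le> card (coal_blocks X t')"
      by (rule card_mono[OF x(3)]) (auto simp: coal_blocks_def)
    finally show False using x(4) big by simp
  qed
qed

definition goodX :: "event set \<Rightarrow> bool" where
  "goodX X \<longleftrightarrow> (\<forall>J N. finite (X \<inter> ({\<tau>. 0 \<le> \<tau> \<and> \<tau> \<le> real N} \<times> Rset J))) \<and> (\<forall>J. X \<inter> ({0} \<times> Rset J) = {})"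

lemma goodX_fin:
  assumes "goodX X" "Y \<subseteq> {\<tau>. 0 \<le> \<tau> \<and> \<tau> \<le> real N}" "B \<subseteq> Rset J"
  shows "finite (X \<inter> (Y \<times> B))"
proof (rule finite_subset[of _ "X \<inter> ({\<tau>. 0 \<le> \<tau> \<and> \<tau> \<le> real N} \<times> Rset J)"])
  show "X \<inter> (Y \<times> B) \<subseteq> X \<inter> ({\<tau>. 0 \<le> \<tau> \<and> \<tau> \<le> real N} \<times> Rset J)" using assms(2,3) by auto
  show "finite (X \<inter> ({\<tau>. 0 \<le> \<tau> \<and> \<tau> \<le> real N} \<times> Rset J))" using assms(1) by (simp add: goodX_def)
qed

lemma cell_in_N:
  assumes "0 < h" "i < M" "0 \<le> a" "a + real M * h \<le> real N"
  shows "cellT a h i \<subseteq> {\<tau>. 0 \<le> \<tau> \<and> \<tau> \<le> real N}"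
  using cell_sub_window[OF assms(1,2), of a] assms(3,4) by auto

lemma anc_to_vec:
  assumes g: "goodX X" and h: "0 < h" and r: "0 \<le> r" and s: "s = r + real M * h" and sN: "s \<le> real N"
    and nb: "\<forall>i<M. card (X \<inter> (cellT r h i \<times> Rset J)) \<le> 1" and cA: "c \<le> real (card (Aset X r s J))"
  shows "(\<lambda>idx\<in>{..<M} \<times> letters J. card (X \<inter> (case idx of (i,S) \<Rightarrow> cellT r h i \<times> markset J S)))
      \<in> {v. (\<forall>i<M. (\<Sum>S\<in>letters J. v (i,S)) \<le> 1) \<and> c \<le> real (card (phiL J v M ` {1..J}))}"
proof -
  define V where "V = (\<lambda>idx\<in>{..<M} \<times> letters J. card (X \<inter> (case idx of (i,S) \<Rightarrow> cellT r h i \<times> markset J S)))"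
  define y where "y = (\<lambda>(i,S). card (X \<inter> (cellT r h i \<times> markset J S)))"
  have fin: "finite (X \<inter> ({\<tau>. r < \<tau> \<and> \<tau> \<le> s} \<times> Rset J))"
    by (rule goodX_fin[where N=N, OF g _ order_refl]) (use r sN in auto)
  have A: "Aset X r s J = phiL J y M ` {1..J}" unfolding y_def by (rule anc_cells[OF h s fin nb])
  have Vy: "V (i,S) = y (i,S)" if "i < M" "S \<in> letters J" for i S using that by (simp add: V_def y_def)
  have ph: "phiL J V M k = phiL J y M k" for k by (rule phiL_cong) (use Vy in auto)
  have sum: "(\<Sum>S\<in>letters J. V (i,S)) \<le> 1" if i: "i < M" for i
  proof -
    have cN: "cellT r h i \<subseteq> {\<tau>. 0 \<le> \<tau> \<and> \<tau> \<le> real N}" by (rule cell_in_N[OF h i r]) (use s sN in simp)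
    have fc: "finite (X \<inter> (cellT r h i \<times> Rset J))" by (rule goodX_fin[OF g cN order_refl])
    have "(\<Sum>S\<in>letters J. V (i,S)) = (\<Sum>S\<in>letters J. card (X \<inter> (cellT r h i \<times> markset J S)))"
      by (rule sum.cong) (use i in \<open>auto simp: V_def\<close>)
    also have "\<dots> = card (X \<inter> (cellT r h i \<times> Rset J))" by (rule card_Rset_sum[symmetric, OF fc])
    finally show ?thesis using nb i by simp
  qed
  have "c \<le> real (card (phiL J V M ` {1..J}))" using cA A ph by simp
  then show ?thesis using sum by (simp add: V_def[symmetric])
qed

lemma coal_from_vec:
  assumes g: "goodX X" and h: "0 < h" and t: "t = real M * h" and tN: "t \<le> real N"
    and V: "(\<lambda>idx\<in>{..<M} \<times> letters J. card (X \<inter> (case idx of (i,S) \<Rightarrow> cellT 0 h (M - 1 - i) \<times> markset J S)))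
      \<in> {v. (\<forall>i<M. (\<Sum>S\<in>letters J. v (i,S)) \<le> 1) \<and> c \<le> real (card (phiL J v M ` {1..J}))}"
    and mm: "real mm < c"
  shows "ennreal t \<le> T_hit X mm"
proof -
  define V where "V = (\<lambda>idx\<in>{..<M} \<times> letters J. card (X \<inter> (case idx of (i,S) \<Rightarrow> cellT 0 h (M - 1 - i) \<times> markset J S)))"
  define y where "y = (\<lambda>(i,S). card (X \<inter> (cellT 0 h i \<times> markset J S)))"
  have Vb: "\<forall>i<M. (\<Sum>S\<in>letters J. V (i,S)) \<le> 1" "c \<le> real (card (phiL J V M ` {1..J}))"
    using V by (simp_all add: V_def)
  have one: "\<forall>j<M. card (X \<inter> (cellT 0 h j \<times> Rset J)) \<le> 1"
  proof (intro allI impI)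
    fix j assume j: "j < M"
    define i where "i = M - 1 - j"
    have i: "i < M" "M - 1 - i = j" using j by (auto simp: i_def)
    have cN: "cellT 0 h j \<subseteq> {\<tau>. 0 \<le> \<tau> \<and> \<tau> \<le> real N}" by (rule cell_in_N[OF h j]) (use t tN in simp_all)
    have fc: "finite (X \<inter> (cellT 0 h j \<times> Rset J))" by (rule goodX_fin[OF g cN order_refl])
    have "(\<Sum>S\<in>letters J. V (i,S)) = (\<Sum>S\<in>letters J. card (X \<inter> (cellT 0 h j \<times> markset J S)))"
      by (rule sum.cong) (use i in \<open>auto simp: V_def\<close>)
    also have "\<dots> = card (X \<inter> (cellT 0 h j \<times> Rset J))" by (rule card_Rset_sum[symmetric, OF fc])
    finally have eq: "(\<Sum>S\<in>letters J. V (i,S)) = card (X \<inter> (cellT 0 h j \<times> Rset J))" .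
    show "card (X \<inter> (cellT 0 h j \<times> Rset J)) \<le> 1" using Vb(1)[rule_format, OF i(1)] eq by simp
  qed
  have fin: "finite (X \<inter> ({\<tau>. 0 \<le> \<tau> \<and> \<tau> \<le> t} \<times> Rset J))"
    by (rule goodX_fin[where N=N, OF g _ order_refl]) (use tN in auto)
  have nz: "X \<inter> ({0} \<times> Rset J) = {}" using g by (simp add: goodX_def)
  have br: "block_rank X t ` {1..J} = psiC J y M ` {1..J}" unfolding y_def by (rule coal_cells(1)[OF h t fin nz one])
  have ph: "phiL J V M k = psiC J y M k" for k
  proof -
    have "phiL J V M k = psiC J (\<lambda>(i,S). V (M - 1 - i, S)) M k" by (rule phiL_eq_psiC_rev)
    also have "\<dots> = psiC J y M k"
    proof (rule psiC_cong)
      fix i S assume "i < M" "S \<in> letters J"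
      then have "M - 1 - i < M" "M - 1 - (M - 1 - i) = i" by auto
      then show "(\<lambda>(i,S). V (M - 1 - i, S)) (i,S) = y (i,S)" using \<open>S \<in> letters J\<close> by (simp add: V_def y_def)
    qed
    finally show ?thesis .
  qed
  have "c \<le> real (card (block_rank X t ` {1..J}))" using Vb(2) br ph by simp
  then have big: "mm < card (block_rank X t ` {1..J})" using mm by linarith
  show ?thesis by (rule T_hit_ge[OF h t fin nz one big])
qed

definition rr :: "nat \<Rightarrow> nat \<Rightarrow> real" where "rr n k = (real k - 1) / 2 ^ n"
definition hh :: "nat \<Rightarrow> nat \<Rightarrow> real" where "hh n m = 1 / 2 ^ n / 2 ^ m"
definition Idx :: "nat \<Rightarrow> nat \<Rightarrow> (nat \<times> nat set) set" where "Idx J m = {..<2^m} \<times> letters J"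
definition Ald :: "nat \<Rightarrow> nat \<Rightarrow> nat \<Rightarrow> nat \<Rightarrow> nat \<times> nat set \<Rightarrow> event set" where
  "Ald n k J m = (\<lambda>(i,S). cellT (rr n k) (hh n m) i \<times> markset J S)"
definition Aco :: "nat \<Rightarrow> nat \<Rightarrow> nat \<Rightarrow> nat \<times> nat set \<Rightarrow> event set" where
  "Aco n J m = (\<lambda>(i,S). cellT 0 (hh n m) (2^m - 1 - i) \<times> markset J S)"
definition Bset :: "nat \<Rightarrow> nat \<Rightarrow> real \<Rightarrow> (nat \<times> nat set \<Rightarrow> nat) set" where
  "Bset J m c = {v. (\<forall>i<2^m. (\<Sum>S\<in>letters J. v (i,S)) \<le> 1) \<and> c \<le> real (card (phiL J v (2^m) ` {1..J}))}"
definition Vset :: "'w measure \<Rightarrow> ('w \<Rightarrow> event set) \<Rightarrow> (nat \<times> nat set \<Rightarrow> event set) \<Rightarrow> (nat \<times> nat set) set \<Rightarrow> (nat \<times> nat set \<Rightarrow> nat) set \<Rightarrow> 'w set" where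
  "Vset M Xi A I B = {\<omega>\<in>space M. (\<lambda>idx\<in>I. card (Xi \<omega> \<inter> A idx)) \<in> B}"
definition badset :: "'w measure \<Rightarrow> ('w \<Rightarrow> event set) \<Rightarrow> nat \<Rightarrow> nat \<Rightarrow> nat \<Rightarrow> nat \<Rightarrow> 'w set" where
  "badset M Xi n k J m = {\<omega>\<in>space M. \<exists>i<2^m. 2 \<le> card (Xi \<omega> \<inter> (cellT (rr n k) (hh n m) i \<times> Rset J))}"
definition Dset :: "'w measure \<Rightarrow> ('w \<Rightarrow> event set) \<Rightarrow> nat \<Rightarrow> nat \<Rightarrow> nat \<Rightarrow> real \<Rightarrow> 'w set" where
  "Dset M Xi n k J c = (\<Inter>m. Vset M Xi (Ald n k J m) (Idx J m) (Bset J m c) \<union> badset M Xi n k J m)"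
definition Badk :: "'w measure \<Rightarrow> ('w \<Rightarrow> event set) \<Rightarrow> nat \<Rightarrow> nat \<Rightarrow> real \<Rightarrow> 'w set" where
  "Badk M Xi n k c = (\<Union>J. \<Inter>J'\<in>{J..}. Dset M Xi n k J' c)"

lemma hh_pos: "0 < hh n m" by (simp add: hh_def)
lemma hh_M: "real (2^m) * hh n m = 1 / 2 ^ n" by (simp add: hh_def)
lemma rr_s: "rr n k + real (2^m) * hh n m = real k / 2 ^ n" by (simp add: rr_def hh_def diff_divide_distrib)
lemma rr_s': "rr n k + 2 ^ m * hh n m = real k / 2 ^ n" using rr_s[of n k m] by simp
lemma rr_nonneg: "1 \<le> k \<Longrightarrow> 0 \<le> rr n k" by (simp add: rr_def)
lemma s_le_k: "real k / 2 ^ n \<le> real k"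
proof -
  have "real k / 2 ^ n \<le> real k / 1" by (rule divide_left_mono) simp_all
  then show ?thesis by simp
qed

lemma cellT_disj:
  assumes "0 < h" "i \<noteq> j"
  shows "cellT a h i \<inter> cellT a h j = {}"
proof -
  have *: "cellT a h i \<inter> cellT a h j = {}" if "i < j" for i j
  proof -
    have "real (Suc i) \<le> real j" using that by simp
    then have "a + real (Suc i) * h \<le> a + real j * h" using assms(1) by (simp add: mult_right_mono)
    then show ?thesis by (auto simp: cellT_def)
  qed
  show ?thesis
  proof (cases "i < j")
    case True then show ?thesis by (rule *)
  next
    case False then have "j < i" using assms(2) by simp
    then show ?thesis using *[of j i] by blast
  qed
qed

lemma vec_sets:
  assumes I: "finite I" and f: "\<And>i. i \<in> I \<Longrightarrow> f i \<in> measurable M (count_space (UNIV::nat set))"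
  shows "{\<omega>\<in>space M. (\<lambda>i\<in>I. f i \<omega>) \<in> B} \<in> sets M"
proof -
  let ?P = "PiM I (\<lambda>_. count_space (UNIV::nat set))"
  have m: "(\<lambda>\<omega>. \<lambda>i\<in>I. f i \<omega>) \<in> measurable M ?P" by (rule measurable_restrict) (rule f)
  have Bs: "B \<inter> space ?P \<in> sets ?P"
  proof (rule sets.countable)
    show "countable (B \<inter> space ?P)"
      by (rule countable_subset[of _ "space ?P"]) (auto simp: space_PiM intro!: countable_PiE I)
    fix v assume "v \<in> B \<inter> space ?P"
    then have v: "v \<in> Pi\<^sub>E I (\<lambda>_. UNIV)" by (simp add: space_PiM)
    have "{v} = Pi\<^sub>E I (\<lambda>n. {v n})" using v by (simp add: PiE_singleton PiE_iff)
    then show "{v} \<in> sets ?P" using I by simp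
  qed
  have "{\<omega>\<in>space M. (\<lambda>i\<in>I. f i \<omega>) \<in> B} = (\<lambda>\<omega>. \<lambda>i\<in>I. f i \<omega>) -` (B \<inter> space ?P) \<inter> space M"
    by (auto simp: space_PiM)
  also have "\<dots> \<in> sets M" by (rule measurable_sets[OF m Bs])
  finally show ?thesis .
qed

locale LD =
  fixes M :: "'w measure" and Xi :: "'w \<Rightarrow> event set" and \<Lambda> :: "real measure"
  assumes finL: "finite_measure \<Lambda>" and PPP: "poisson_point_process M Xi (event_intensity \<Lambda>)"
begin

lemma probM: "prob_space M" using PPP by (simp add: poisson_point_process_def)

lemma cell_set:
  assumes "0 \<le> a" "0 < h" "B \<in> sets mark_space" "B \<subseteq> Rset J"
  shows "cellT a h i \<times> B \<in> sets (event_intensity \<Lambda>)" "emeasure (event_intensity \<Lambda>) (cellT a h i \<times> B) < \<infinity>"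
    "emeasure (event_intensity \<Lambda>) (cellT a h i \<times> B) = evc \<Lambda> * (ennreal h * emeasure (mark_intensity \<Lambda>) B)"
proof -
  have c: "cellT a h i \<in> sets borel" "cellT a h i \<subseteq> {0..}" using cellT_borel cellT_pos assms(1,2) by auto
  show "cellT a h i \<times> B \<in> sets (event_intensity \<Lambda>)" by (rule Ev_times(1)[OF c assms(3)])
  show "emeasure (event_intensity \<Lambda>) (cellT a h i \<times> B) < \<infinity>"
    by (rule Ev_finite[OF finL c]) (use cellT_len[of h a i] assms in auto)
  show "emeasure (event_intensity \<Lambda>) (cellT a h i \<times> B) = evc \<Lambda> * (ennreal h * emeasure (mark_intensity \<Lambda>) B)"
    using Ev_times(2)[OF c assms(3)] cellT_len[of h a i] assms(2) by simp
qed

lemma cell_card_meas: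
  assumes "0 \<le> a" "0 < h" "B \<in> sets mark_space" "B \<subseteq> Rset J"
  shows "(\<lambda>\<omega>. card (Xi \<omega> \<inter> (cellT a h i \<times> B))) \<in> measurable M (count_space UNIV)"
  using ppp_facts(3)[OF PPP cell_set(1,2)[OF assms]] .

lemma law_cells:
  assumes r: "0 \<le> r" and h: "0 < h"
  shows "measure M (Vset M Xi (\<lambda>(i,S). cellT r h i \<times> markset J S) ({..<K} \<times> letters J) B) =
         measure M (Vset M Xi (\<lambda>(i,S). cellT 0 h (K - 1 - i) \<times> markset J S) ({..<K} \<times> letters J) B)"
  unfolding Vset_def
proof (rule law_eq[OF PPP])
  show "finite ({..<K} \<times> letters J)" using finite_letters by simp
  show "(case idx of (i,S) \<Rightarrow> cellT r h i \<times> markset J S) \<in> sets (event_intensity \<Lambda>) \<and>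
      emeasure (event_intensity \<Lambda>) (case idx of (i,S) \<Rightarrow> cellT r h i \<times> markset J S) < \<infinity>"
    if "idx \<in> {..<K} \<times> letters J" for idx
    using that cell_set(1,2)[OF r h markset_sets markset_sub_Rset] by auto
  show "(case idx of (i,S) \<Rightarrow> cellT 0 h (K - 1 - i) \<times> markset J S) \<in> sets (event_intensity \<Lambda>) \<and>
      emeasure (event_intensity \<Lambda>) (case idx of (i,S) \<Rightarrow> cellT 0 h (K - 1 - i) \<times> markset J S) < \<infinity>"
    if "idx \<in> {..<K} \<times> letters J" for idx
    using that cell_set(1,2)[OF order_refl h markset_sets markset_sub_Rset] by auto
  show "disjoint_family_on (\<lambda>(i,S). cellT r h i \<times> markset J S) ({..<K} \<times> letters J)"
    unfolding disjoint_family_on_def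
  proof (intro ballI impI)
    fix p q assume pq: "p \<in> {..<K} \<times> letters J" "q \<in> {..<K} \<times> letters J" "p \<noteq> q"
    obtain i S i' S' where pq': "p = (i,S)" "q = (i',S')" by (cases p, cases q)
    show "(case p of (i,S) \<Rightarrow> cellT r h i \<times> markset J S) \<inter> (case q of (i,S) \<Rightarrow> cellT r h i \<times> markset J S) = {}"
    proof (cases "i = i'")
      case True then have "S \<noteq> S'" using pq pq' by simp
      then show ?thesis using markset_disj[of S S' J] pq' by auto
    next
      case False then show ?thesis using cellT_disj[OF h False, of r] pq' by auto
    qed
  qed
  show "disjoint_family_on (\<lambda>(i,S). cellT 0 h (K - 1 - i) \<times> markset J S) ({..<K} \<times> letters J)"
    unfolding disjoint_family_on_def
  proof (intro ballI impI)
    fix p q assume pq: "p \<in> {..<K} \<times> letters J" "q \<in> {..<K} \<times> letters J" "p \<noteq> q"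
    obtain i S i' S' where pq': "p = (i,S)" "q = (i',S')" by (cases p, cases q)
    show "(case p of (i,S) \<Rightarrow> cellT 0 h (K - 1 - i) \<times> markset J S) \<inter> (case q of (i,S) \<Rightarrow> cellT 0 h (K - 1 - i) \<times> markset J S) = {}"
    proof (cases "i = i'")
      case True then have "S \<noteq> S'" using pq pq' by simp
      then show ?thesis using markset_disj[of S S' J] pq' by auto
    next
      case False
      then have ne: "K - 1 - i \<noteq> K - 1 - i'" using pq pq' by auto
      have "cellT 0 h (K - 1 - i) \<inter> cellT 0 h (K - 1 - i') = {}" by (rule cellT_disj[OF h ne])
      then show ?thesis using pq' by auto
    qed
  qed
  show "emeasure (event_intensity \<Lambda>) (case idx of (i,S) \<Rightarrow> cellT r h i \<times> markset J S) =
      emeasure (event_intensity \<Lambda>) (case idx of (i,S) \<Rightarrow> cellT 0 h (K - 1 - i) \<times> markset J S)"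
    if "idx \<in> {..<K} \<times> letters J" for idx
    using that cell_set(3)[OF r h markset_sets markset_sub_Rset] cell_set(3)[OF order_refl h markset_sets markset_sub_Rset]
    by auto
qed

lemma bad_bound:
  assumes a: "0 \<le> a" and h: "0 < h"
  shows "measure M {\<omega>\<in>space M. \<exists>i<K. 2 \<le> card (Xi \<omega> \<inter> (cellT a h i \<times> Rset J))}
      \<le> real K * (h * enn2real (emeasure (mark_intensity \<Lambda>) (Rset J)))\<^sup>2"
proof -
  interpret prob_space M by (rule probM)
  define \<rho> where "\<rho> = enn2real (emeasure (mark_intensity \<Lambda>) (Rset J))"
  have mk: "emeasure (mark_intensity \<Lambda>) (Rset J) < \<infinity>"
    using emeasure_mark_le[of \<Lambda> "Rset J"] FM_Rset_finite[OF finL, of J] by (simp add: le_less_trans)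
  then have mk': "emeasure (mark_intensity \<Lambda>) (Rset J) = ennreal \<rho>" by (simp add: \<rho>_def)
  have \<rho>0: "0 \<le> \<rho>" by (simp add: \<rho>_def)
  let ?B = "\<lambda>i. {\<omega>\<in>space M. 2 \<le> card (Xi \<omega> \<inter> (cellT a h i \<times> Rset J))}"
  have Bs: "?B i \<in> events" for i using count_set_sets[where S="{2..}", OF cell_card_meas[OF a h Rset_sets order_refl, of i]] by simp
  have "{\<omega>\<in>space M. \<exists>i<K. 2 \<le> card (Xi \<omega> \<inter> (cellT a h i \<times> Rset J))} = (\<Union>i\<in>{..<K}. ?B i)" by auto
  then have "measure M {\<omega>\<in>space M. \<exists>i<K. 2 \<le> card (Xi \<omega> \<inter> (cellT a h i \<times> Rset J))} \<le> (\<Sum>i\<in>{..<K}. measure M (?B i))"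
    using finite_measure_subadditive_finite[of "{..<K}" ?B] Bs by auto
  also have "\<dots> \<le> (\<Sum>i\<in>{..<K}. (h * \<rho>)\<^sup>2)"
  proof (rule sum_mono)
    fix i
    have cs: "cellT a h i \<times> Rset J \<in> sets (event_intensity \<Lambda>)" "emeasure (event_intensity \<Lambda>) (cellT a h i \<times> Rset J) < \<infinity>"
      using cell_set(1,2)[OF a h Rset_sets order_refl] by auto
    have "measure M (?B i) \<le> (enn2real (emeasure (event_intensity \<Lambda>) (cellT a h i \<times> Rset J)))\<^sup>2"
      by (rule ppp_ge2[OF PPP cs])
    also have "enn2real (emeasure (event_intensity \<Lambda>) (cellT a h i \<times> Rset J)) \<le> h * \<rho>"
    proof -
      have "emeasure (event_intensity \<Lambda>) (cellT a h i \<times> Rset J) = evc \<Lambda> * ennreal (h * \<rho>)"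
        using cell_set(3)[OF a h Rset_sets order_refl] mk' h \<rho>0 by (simp add: ennreal_mult)
      moreover have "evc \<Lambda> = 0 \<or> evc \<Lambda> = 1" by (simp add: evc_def)
      ultimately show ?thesis using h \<rho>0 by auto
    qed
    then have "(enn2real (emeasure (event_intensity \<Lambda>) (cellT a h i \<times> Rset J)))\<^sup>2 \<le> (h * \<rho>)\<^sup>2"
      by (rule power_mono) simp
    finally show "measure M (?B i) \<le> (h * \<rho>)\<^sup>2" .
  qed
  also have "\<dots> = real K * (h * \<rho>)\<^sup>2" by simp
  finally show ?thesis by (simp add: \<rho>_def)
qed

lemma markov_T:
  assumes S: "S \<in> sets M" and t: "0 < t" and AE: "AE \<omega> in M. \<omega> \<in> S \<longrightarrow> ennreal t \<le> T_hit (Xi \<omega>) mm"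
  shows "emeasure M S \<le> ennreal (1 / t) * (\<integral>\<^sup>+\<omega>. T_hit (Xi \<omega>) mm \<partial>M)"
proof -
  have "ennreal t * emeasure M S = (\<integral>\<^sup>+\<omega>. ennreal t * indicator S \<omega> \<partial>M)"
    by (rule nn_integral_cmult_indicator[symmetric, OF S])
  also have "\<dots> \<le> (\<integral>\<^sup>+\<omega>. T_hit (Xi \<omega>) mm \<partial>M)"
    by (rule nn_integral_mono_AE) (use AE in \<open>auto simp: indicator_def\<close>)
  finally have *: "ennreal t * emeasure M S \<le> (\<integral>\<^sup>+\<omega>. T_hit (Xi \<omega>) mm \<partial>M)" .
  have one: "ennreal (1 / t) * ennreal t = 1" using t by (simp add: ennreal_mult[symmetric])
  have "ennreal (1 / t) * (ennreal t * emeasure M S) = (ennreal (1 / t) * ennreal t) * emeasure M S"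
    by (rule mult.assoc[symmetric])
  then have "emeasure M S = ennreal (1 / t) * (ennreal t * emeasure M S)" using one by simp
  also have "\<dots> \<le> ennreal (1 / t) * (\<integral>\<^sup>+\<omega>. T_hit (Xi \<omega>) mm \<partial>M)" by (rule mult_left_mono[OF *]) simp
  finally show ?thesis .
qed

end

context LD
begin

lemma good_AE: "AE \<omega> in M. goodX (Xi \<omega>)"
proof -
  interpret prob_space M by (rule probM)
  have A1: "AE \<omega> in M. \<forall>p::nat\<times>nat. finite (Xi \<omega> \<inter> ({\<tau>. 0 \<le> \<tau> \<and> \<tau> \<le> real (snd p)} \<times> Rset (fst p)))"
  proof (subst AE_all_countable, intro allI)
    fix p :: "nat \<times> nat"
    have eq: "{\<tau>. 0 \<le> \<tau> \<and> \<tau> \<le> real (snd p)} = {0..real (snd p)}" by auto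
    have I: "{0..real (snd p)} \<in> sets borel" "{0..real (snd p)} \<subseteq> {0..}" "emeasure lborel {0..real (snd p)} < \<infinity>"
      by auto
    show "AE \<omega> in M. finite (Xi \<omega> \<inter> ({\<tau>. 0 \<le> \<tau> \<and> \<tau> \<le> real (snd p)} \<times> Rset (fst p)))"
      unfolding eq
      by (rule ppp_facts(2)[OF PPP Ev_times(1)[OF I(1,2) Rset_sets] Ev_finite[OF finL I Rset_sets order_refl]])
  qed
  have A2: "AE \<omega> in M. \<forall>J. Xi \<omega> \<inter> ({0} \<times> Rset J) = {}"
  proof (subst AE_all_countable, intro allI)
    fix J :: nat
    have I: "{0::real} \<in> sets borel" "{0::real} \<subseteq> {0..}" by auto
    have Zs: "{0} \<times> Rset J \<in> sets (event_intensity \<Lambda>)" by (rule Ev_times(1)[OF I Rset_sets])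
    have Z0: "emeasure (event_intensity \<Lambda>) ({0} \<times> Rset J) = 0"
      using Ev_times(2)[OF I Rset_sets] by simp
    have Zf: "emeasure (event_intensity \<Lambda>) ({0} \<times> Rset J) < \<infinity>" using Z0 by simp
    have "prob {\<omega>\<in>space M. card (Xi \<omega> \<inter> ({0} \<times> Rset J)) = 0} = 1"
      using ppp_facts(4)[OF PPP Zs Zf, of 0] Z0 by simp
    then have "AE \<omega> in M. \<omega> \<in> {\<omega>\<in>space M. card (Xi \<omega> \<inter> ({0} \<times> Rset J)) = 0}" by (rule AE_prob_1)
    moreover have "AE \<omega> in M. finite (Xi \<omega> \<inter> ({0} \<times> Rset J))" by (rule ppp_facts(2)[OF PPP Zs Zf])
    ultimately show "AE \<omega> in M. Xi \<omega> \<inter> ({0} \<times> Rset J) = {}" by eventually_elim auto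
  qed
  show ?thesis using A1 A2 by eventually_elim (auto simp: goodX_def)
qed

lemma Vset_meas:
  assumes "finite I" "\<And>idx. idx \<in> I \<Longrightarrow> (\<lambda>\<omega>. card (Xi \<omega> \<inter> A idx)) \<in> measurable M (count_space UNIV)"
  shows "Vset M Xi A I B \<in> sets M"
  unfolding Vset_def by (rule vec_sets[OF assms])

lemma Vld_meas: "1 \<le> k \<Longrightarrow> Vset M Xi (Ald n k J m) (Idx J m) B \<in> sets M"
proof (rule Vset_meas)
  assume k: "1 \<le> k"
  show "finite (Idx J m)" by (simp add: Idx_def finite_letters)
  fix idx assume "idx \<in> Idx J m"
  then obtain i S where iS: "idx = (i,S)" "S \<in> letters J" by (auto simp: Idx_def)
  show "(\<lambda>\<omega>. card (Xi \<omega> \<inter> Ald n k J m idx)) \<in> measurable M (count_space UNIV)"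
    using cell_card_meas[OF rr_nonneg[OF k] hh_pos markset_sets markset_sub_Rset[OF iS(2)]] by (simp add: Ald_def iS(1))
qed

lemma Vco_meas: "Vset M Xi (Aco n J m) (Idx J m) B \<in> sets M"
proof (rule Vset_meas)
  show "finite (Idx J m)" by (simp add: Idx_def finite_letters)
  fix idx assume "idx \<in> Idx J m"
  then obtain i S where iS: "idx = (i,S)" "S \<in> letters J" by (auto simp: Idx_def)
  show "(\<lambda>\<omega>. card (Xi \<omega> \<inter> Aco n J m idx)) \<in> measurable M (count_space UNIV)"
    using cell_card_meas[OF order_refl hh_pos markset_sets markset_sub_Rset[OF iS(2)]] by (simp add: Aco_def iS(1))
qed

lemma bad_meas: "1 \<le> k \<Longrightarrow> badset M Xi n k J m \<in> sets M"
proof -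
  assume k: "1 \<le> k"
  have "badset M Xi n k J m = (\<Union>i\<in>{..<2^m}. {\<omega>\<in>space M. card (Xi \<omega> \<inter> (cellT (rr n k) (hh n m) i \<times> Rset J)) \<in> {2..}})"
    by (auto simp: badset_def)
  also have "\<dots> \<in> sets M"
    by (intro sets.finite_UN finite_lessThan ballI count_set_sets) (rule cell_card_meas[OF rr_nonneg[OF k] hh_pos Rset_sets order_refl])
  finally show ?thesis .
qed

lemma D_meas: assumes k: "1 \<le> k" shows "Dset M Xi n k J c \<in> sets M"
  unfolding Dset_def by (rule sets.countable_INT) (auto intro!: sets.Un Vld_meas[OF k] bad_meas[OF k])

lemma D_bound:
  assumes k: "1 \<le> k" and mmc: "real mm < c"
  shows "emeasure M (Dset M Xi n k J c) \<le> ennreal (2^n) * (\<integral>\<^sup>+\<omega>. T_hit (Xi \<omega>) mm \<partial>M)"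
proof (rule ennreal_le_epsilon)
  interpret prob_space M by (rule probM)
  fix e :: real assume "ennreal (2^n) * (\<integral>\<^sup>+\<omega>. T_hit (Xi \<omega>) mm \<partial>M) < \<top>" and e: "0 < e"
  define \<rho> where "\<rho> = enn2real (emeasure (mark_intensity \<Lambda>) (Rset J))"
  obtain m :: nat where m: "\<rho>\<^sup>2 / e < 2 ^ m" using real_arch_pow[of 2 "\<rho>\<^sup>2 / e"] by auto
  let ?E = "\<integral>\<^sup>+\<omega>. T_hit (Xi \<omega>) mm \<partial>M"
  let ?Vl = "Vset M Xi (Ald n k J m) (Idx J m) (Bset J m c)"
  let ?Vc = "Vset M Xi (Aco n J m) (Idx J m) (Bset J m c)"
  let ?bd = "badset M Xi n k J m"
  have VlVc: "emeasure M ?Vl = emeasure M ?Vc"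
  proof -
    have "measure M ?Vl = measure M ?Vc"
      unfolding Ald_def Aco_def Idx_def by (rule law_cells[OF rr_nonneg[OF k] hh_pos])
    then show ?thesis using Vld_meas[OF k] Vco_meas by (simp add: emeasure_eq_measure)
  qed
  have Vc: "emeasure M ?Vc \<le> ennreal (1 / (1 / 2 ^ n)) * ?E"
  proof (rule markov_T[OF Vco_meas])
    show "0 < (1::real) / 2 ^ n" by simp
    show "AE \<omega> in M. \<omega> \<in> ?Vc \<longrightarrow> ennreal (1 / 2 ^ n) \<le> T_hit (Xi \<omega>) mm"
      using good_AE
    proof eventually_elim
      case (elim \<omega>)
      show ?case
      proof
        assume "\<omega> \<in> ?Vc"
        then have V: "(\<lambda>idx\<in>{..<2^m} \<times> letters J. card (Xi \<omega> \<inter> (case idx of (i,S) \<Rightarrow> cellT 0 (hh n m) (2^m - 1 - i) \<times> markset J S)))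
            \<in> {v. (\<forall>i<2^m. (\<Sum>S\<in>letters J. v (i,S)) \<le> 1) \<and> c \<le> real (card (phiL J v (2^m) ` {1..J}))}"
          by (simp add: Vset_def Aco_def Idx_def Bset_def)
        show "ennreal (1 / 2 ^ n) \<le> T_hit (Xi \<omega>) mm"
          by (rule coal_from_vec[where N=1, OF elim hh_pos hh_M[symmetric] _ V mmc]) (simp add: divide_le_eq)
      qed
    qed
  qed
  have Vl: "emeasure M ?Vl \<le> ennreal (2^n) * ?E" using VlVc Vc by simp
  have bd: "emeasure M ?bd \<le> ennreal e"
  proof -
    have "measure M ?bd \<le> real (2^m) * (hh n m * \<rho>)\<^sup>2"
      unfolding badset_def \<rho>_def by (rule bad_bound[OF rr_nonneg[OF k] hh_pos])
    also have "\<dots> = \<rho>\<^sup>2 / (2^n)\<^sup>2 / 2 ^ m" by (simp add: hh_def power2_eq_square field_simps)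
    also have "\<dots> \<le> \<rho>\<^sup>2 / 2 ^ m"
    proof -
      have "\<rho>\<^sup>2 / (2^n)\<^sup>2 \<le> \<rho>\<^sup>2 / 1" by (rule divide_left_mono) simp_all
      then have "\<rho>\<^sup>2 / (2^n)\<^sup>2 \<le> \<rho>\<^sup>2" by simp
      then show ?thesis by (rule divide_right_mono) simp
    qed
    also have "\<dots> \<le> e"
    proof -
      have "\<rho>\<^sup>2 < 2 ^ m * e" using m e by (simp add: pos_divide_less_eq)
      then have "\<rho>\<^sup>2 / 2 ^ m < e" by (simp add: pos_divide_less_eq mult.commute)
      then show ?thesis by simp
    qed
    finally have "measure M ?bd \<le> e" .
    then show ?thesis using bad_meas[OF k] by (simp add: emeasure_eq_measure ennreal_leI)
  qed
  have "emeasure M (Dset M Xi n k J c) \<le> emeasure M (?Vl \<union> ?bd)"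
    by (rule emeasure_mono) (auto simp: Dset_def intro!: sets.Un Vld_meas bad_meas k)
  also have "\<dots> \<le> emeasure M ?Vl + emeasure M ?bd"
    by (rule emeasure_subadditive) (auto intro!: Vld_meas bad_meas k)
  also have "\<dots> \<le> ennreal (2^n) * ?E + ennreal e" by (rule add_mono[OF Vl bd])
  finally show "emeasure M (Dset M Xi n k J c) \<le> ennreal (2 ^ n) * ?E + ennreal e" .
qed

lemma Badk_meas: assumes k: "1 \<le> k" shows "Badk M Xi n k c \<in> sets M"
  unfolding Badk_def
proof (rule sets.countable_UN)
  show "(\<lambda>J. \<Inter>J'\<in>{J..}. Dset M Xi n k J' c) ` UNIV \<subseteq> sets M"
  proof safe
    fix J show "(\<Inter>J'\<in>{J..}. Dset M Xi n k J' c) \<in> sets M"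
      by (rule sets.countable_INT) (auto intro!: D_meas[OF k])
  qed
qed

lemma Badk_bound:
  assumes k: "1 \<le> k" and mmc: "real mm < c"
  shows "emeasure M (Badk M Xi n k c) \<le> ennreal (2^n) * (\<integral>\<^sup>+\<omega>. T_hit (Xi \<omega>) mm \<partial>M)"
proof -
  define G where "G = (\<lambda>J. \<Inter>J'\<in>{J..}. Dset M Xi n k J' c)"
  have Gs: "G J \<in> sets M" for J unfolding G_def by (rule sets.countable_INT) (auto intro!: D_meas[OF k])
  have inc: "incseq G" unfolding G_def incseq_def by auto
  have "emeasure M (Badk M Xi n k c) = emeasure M (\<Union>J. G J)" by (simp add: Badk_def G_def)
  also have "\<dots> = (SUP J. emeasure M (G J))" by (rule SUP_emeasure_incseq[symmetric]) (use Gs inc in auto)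
  also have "\<dots> \<le> ennreal (2^n) * (\<integral>\<^sup>+\<omega>. T_hit (Xi \<omega>) mm \<partial>M)"
  proof (rule SUP_least)
    fix J
    have "emeasure M (G J) \<le> emeasure M (Dset M Xi n k J c)"
      by (rule emeasure_mono) (auto simp: G_def intro!: D_meas k)
    also have "\<dots> \<le> ennreal (2^n) * (\<integral>\<^sup>+\<omega>. T_hit (Xi \<omega>) mm \<partial>M)" by (rule D_bound[OF k mmc])
    finally show "emeasure M (G J) \<le> ennreal (2^n) * (\<integral>\<^sup>+\<omega>. T_hit (Xi \<omega>) mm \<partial>M)" .
  qed
  finally show ?thesis .
qed

lemma Badk_contains:
  assumes \<omega>: "\<omega> \<in> space M" and g: "goodX (Xi \<omega>)" and k: "1 \<le> k" and nb: "\<not> N_nk_less (Xi \<omega>) n k c"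
  shows "\<omega> \<in> Badk M Xi n k c"
proof -
  obtain J where J: "\<forall>J'\<ge>J. c \<le> real (card (Aset (Xi \<omega>) ((real k - 1) / 2 ^ n) (real k / 2 ^ n) J'))"
    using N_bad[OF nb] by blast
  have "\<omega> \<in> Dset M Xi n k J' c" if J': "J \<le> J'" for J'
    unfolding Dset_def
  proof (intro INT_I)
    fix m
    show "\<omega> \<in> Vset M Xi (Ald n k J' m) (Idx J' m) (Bset J' m c) \<union> badset M Xi n k J' m"
    proof (cases "\<omega> \<in> badset M Xi n k J' m")
      case True then show ?thesis by blast
    next
      case False
      then have nbad: "\<forall>i<2^m. card (Xi \<omega> \<inter> (cellT (rr n k) (hh n m) i \<times> Rset J')) \<le> 1"
        using \<omega> by (auto simp: badset_def not_le)
      have cA: "c \<le> real (card (Aset (Xi \<omega>) (rr n k) (rr n k + real (2^m) * hh n m) J'))"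
        unfolding rr_s unfolding rr_def using J J' by simp
      have "(\<lambda>idx\<in>{..<2^m} \<times> letters J'. card (Xi \<omega> \<inter> (case idx of (i,S) \<Rightarrow> cellT (rr n k) (hh n m) i \<times> markset J' S)))
          \<in> {v. (\<forall>i<2^m. (\<Sum>S\<in>letters J'. v (i,S)) \<le> 1) \<and> c \<le> real (card (phiL J' v (2^m) ` {1..J'}))}"
        by (rule anc_to_vec[where N=k, OF g hh_pos rr_nonneg[OF k] refl _ nbad cA])
          (simp add: rr_s' s_le_k)
      then have "\<omega> \<in> Vset M Xi (Ald n k J' m) (Idx J' m) (Bset J' m c)"
        using \<omega> by (simp add: Vset_def Ald_def Idx_def Bset_def)
      then show ?thesis by blast
    qed
  qed
  then show ?thesis unfolding Badk_def by blast
qed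

end

lemma four_powr_ge: "0 \<le> x \<Longrightarrow> 1 + x \<le> 4 powr (x::real)"
proof -
  assume x: "0 \<le> x"
  have "exp 1 \<le> (4::real)" using exp_le by simp
  then have l4: "1 \<le> ln (4::real)" by (subst ln_ge_iff) simp_all
  have "x \<le> x * ln 4" using x l4 by (simp add: mult_le_cancel_left1)
  then have "exp x \<le> exp (x * ln 4)" by simp
  moreover have "1 + x \<le> exp x" by (rule exp_ge_add_one_self)
  moreover have "4 powr x = exp (x * ln 4)" by (simp add: powr_def)
  ultimately show ?thesis by linarith
qed

lemma count_bound:
  fixes \<alpha> T K c mmr :: real and n :: nat
  assumes a: "0 < \<alpha>" and T: "0 < T" and K: "0 < K" and n: "1 \<le> n"
    and c: "c = 4 powr (real n / \<alpha>) * real n powr (2 / \<alpha>)" and c2: "2 \<le> c" and mm: "c - 1 \<le> mmr"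
  shows "2 ^ n * T * 2 ^ n * (K / mmr powr \<alpha>) \<le> T * K * 2 powr \<alpha> / (real n)\<^sup>2"
proof -
  have n0: "0 < real n" using n by simp
  have mm2: "c / 2 \<le> mmr" using mm c2 by simp
  have c0: "0 < c" using c2 by simp
  have cpow: "c powr \<alpha> = 4 ^ n * (real n)\<^sup>2"
  proof -
    have "c powr \<alpha> = (4 powr (real n / \<alpha>)) powr \<alpha> * (real n powr (2 / \<alpha>)) powr \<alpha>"
      unfolding c by (rule powr_mult)
    also have "(4 powr (real n / \<alpha>)) powr \<alpha> = 4 powr (real n)" using a by (simp add: powr_powr)
    also have "(real n powr (2 / \<alpha>)) powr \<alpha> = real n powr 2" using a by (simp add: powr_powr)
    also have "4 powr (real n) = (4::real) ^ n" by (simp add: powr_realpow)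
    also have "real n powr 2 = (real n)\<^sup>2" using n0 by (simp add: powr_realpow[of "real n" 2, simplified])
    finally show ?thesis .
  qed
  have "(c / 2) powr \<alpha> \<le> mmr powr \<alpha>" by (rule powr_mono2) (use a c0 mm2 in simp_all)
  moreover have "(c / 2) powr \<alpha> = c powr \<alpha> / 2 powr \<alpha>" using c0 by (simp add: powr_divide)
  ultimately have low: "4 ^ n * (real n)\<^sup>2 / 2 powr \<alpha> \<le> mmr powr \<alpha>" using cpow by simp
  have lp: "0 < 4 ^ n * (real n)\<^sup>2 / 2 powr \<alpha>" using n0 by simp
  have mp: "0 < mmr powr \<alpha>" using lp low by linarith
  have e4: "(2::real) ^ n * 2 ^ n = 4 ^ n" by (simp add: power_mult_distrib[symmetric])
  have "2 ^ n * T * 2 ^ n * (K / mmr powr \<alpha>) = (4 ^ n * T * K) / mmr powr \<alpha>"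
    using e4 by (simp add: field_simps)
  also have "\<dots> \<le> (4 ^ n * T * K) / (4 ^ n * (real n)\<^sup>2 / 2 powr \<alpha>)"
    by (rule divide_left_mono[OF low]) (use T K in simp, rule mult_pos_pos[OF mp lp])
  also have "\<dots> = T * K * 2 powr \<alpha> / (real n)\<^sup>2" using n0 by (simp add: field_simps)
  finally show ?thesis .
qed

theorem lemma5p7:
  fixes M :: "'w measure" and Xi :: "'w \<Rightarrow> event set" and \<Lambda> :: "real measure"
    and \<alpha> :: real and T :: real
  assumes Lambda_finite: "finite_measure \<Lambda>"
    and Lambda_sets: "sets \<Lambda> = sets borel"
    and Lambda_support: "emeasure \<Lambda> (- {0..1}) = 0"
    and PPP: "poisson_point_process M Xi (event_intensity \<Lambda>)"
    and alpha_pos: "\<alpha> > 0"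
    and assumption_I: "limsup (\<lambda>m::nat. ennreal (real m powr \<alpha>) * (\<integral>\<^sup>+\<omega>. T_hit (Xi \<omega>) m \<partial>M)) < \<infinity>"
    and T_pos: "T > 0"
  shows "AE \<omega> in M. \<forall>\<^sub>F n in sequentially.
           \<forall>k::nat. 1 \<le> k \<and> real k \<le> 2 ^ n * T \<longrightarrow>
             N_nk_less (Xi \<omega>) n k (4 powr (real n / \<alpha>) * real n powr (2 / \<alpha>))"
proof -
  interpret LD M Xi \<Lambda> using Lambda_finite PPP by (rule LD.intro)
  interpret prob_space M by (rule probM)
  let ?E = "\<lambda>m. \<integral>\<^sup>+\<omega>. T_hit (Xi \<omega>) m \<partial>M"
  let ?f = "\<lambda>m::nat. ennreal (real m powr \<alpha>) * ?E m"
  define L where "L = limsup ?f"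
  have Lf: "L < \<infinity>" using assumption_I by (simp add: L_def)
  define K where "K = enn2real L + 1"
  have "0 \<le> enn2real L" by simp
  then have K0: "0 < K" unfolding K_def by linarith
  have LK: "L < ennreal K" using Lf by (cases L) (auto simp: K_def)
  have "eventually (\<lambda>m. ?f m < ennreal K) sequentially" by (rule Limsup_lessD) (use LK in \<open>simp add: L_def\<close>)
  then obtain N0 where N0: "\<And>m. N0 \<le> m \<Longrightarrow> ?f m < ennreal K" by (auto simp: eventually_sequentially)
  define M0 where "M0 = max N0 1"
  have EK: "?E m \<le> ennreal (K / real m powr \<alpha>)" if m: "M0 \<le> m" for m
  proof -
    have m1: "1 \<le> m" "N0 \<le> m" using m by (auto simp: M0_def)
    define p where "p = real m powr \<alpha>"
    have p0: "0 < p" using m1 by (simp add: p_def)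
    have one: "ennreal (1 / p) * ennreal p = 1" using p0 by (simp add: ennreal_mult[symmetric])
    have "?E m = ennreal (1 / p) * (ennreal p * ?E m)"
      by (simp add: mult.assoc[symmetric] one)
    also have "\<dots> \<le> ennreal (1 / p) * ennreal K"
      by (rule mult_left_mono) (use N0[OF m1(2)] in \<open>simp_all add: p_def less_imp_le\<close>)
    also have "\<dots> = ennreal (K / p)" using p0 K0 by (simp add: ennreal_mult[symmetric])
    finally show ?thesis by (simp add: p_def)
  qed
  define c where "c = (\<lambda>n::nat. 4 powr (real n / \<alpha>) * real n powr (2 / \<alpha>))"
  define mm where "mm = (\<lambda>n. nat (ceiling (c n)) - 1)"
  have cge: "1 + real n / \<alpha> \<le> c n" if "1 \<le> n" for n
  proof -
    have "1 + real n / \<alpha> \<le> 4 powr (real n / \<alpha>)" by (rule four_powr_ge) (use alpha_pos in simp)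
    moreover have "1 \<le> real n powr (2 / \<alpha>)" by (rule ge_one_powr_ge_zero) (use that alpha_pos in simp_all)
    moreover have "0 \<le> 4 powr (real n / \<alpha>)" by simp
    ultimately have "(1 + real n / \<alpha>) * 1 \<le> 4 powr (real n / \<alpha>) * real n powr (2 / \<alpha>)"
      by (intro mult_mono) simp_all
    then show ?thesis by (simp add: c_def)
  qed
  have mmc: "real (mm n) < c n" "c n - 1 \<le> real (mm n)" if "1 \<le> c n" for n
  proof -
    have ci: "1 \<le> ceiling (c n)" using that by simp
    have nat1: "1 \<le> nat (ceiling (c n))" using ci by linarith
    have r1: "real (mm n) = real (nat (ceiling (c n))) - 1" using nat1 by (simp add: mm_def of_nat_diff)
    have r2: "real (nat (ceiling (c n))) = real_of_int (ceiling (c n))" using ci by simp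
    have r: "real (mm n) = real_of_int (ceiling (c n)) - 1" using r1 r2 by simp
    show "real (mm n) < c n" "c n - 1 \<le> real (mm n)" using r ceiling_correct[of "c n"] by linarith+
  qed
  define N1 where "N1 = nat (ceiling (\<alpha> * (real M0 + 2))) + 1"
  have big: "2 \<le> c n \<and> M0 \<le> mm n \<and> 1 \<le> n" if n: "N1 \<le> n" for n
  proof -
    have n1: "1 \<le> n" using n by (simp add: N1_def)
    have "\<alpha> * (real M0 + 2) \<le> real n" using n by (simp add: N1_def) linarith
    then have "real M0 + 2 \<le> real n / \<alpha>" using alpha_pos by (simp add: field_simps)
    then have c3: "real M0 + 3 \<le> c n" using cge[OF n1] by linarith
    then have "c n - 1 \<le> real (mm n)" using mmc(2)[of n] by simp
    then have "real M0 \<le> real (mm n)" using c3 by linarith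
    then show ?thesis using c3 n1 by simp
  qed
  define Bn where "Bn = (\<lambda>n. if N1 \<le> n then (\<Union>k\<in>{1..nat (floor (2 ^ n * T))}. Badk M Xi n k (c n)) else {})"
  have Bns: "Bn n \<in> sets M" for n
    unfolding Bn_def by (auto intro!: sets.finite_UN Badk_meas)
  have Bnm: "measure M (Bn n) \<le> T * K * 2 powr \<alpha> * inverse (real n ^ 2)" if n: "N1 \<le> n" for n
  proof -
    note b = big[OF n]
    let ?I = "{1..nat (floor (2 ^ n * T))}"
    define X where "X = 2 ^ n * (K / real (mm n) powr \<alpha>)"
    have X0: "0 \<le> X" using K0 by (simp add: X_def)
    have bk: "emeasure M (Badk M Xi n k (c n)) \<le> ennreal X" if "k \<in> ?I" for k
    proof -
      have k1: "1 \<le> k" using that by simp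
      have "emeasure M (Badk M Xi n k (c n)) \<le> ennreal (2^n) * ?E (mm n)"
        by (rule Badk_bound[OF k1 mmc(1)]) (use b in simp)
      also have "\<dots> \<le> ennreal (2^n) * ennreal (K / real (mm n) powr \<alpha>)"
        by (rule mult_left_mono[OF EK]) (use b in simp_all)
      also have "\<dots> = ennreal X" unfolding X_def by (rule ennreal_mult[symmetric]) (use K0 in auto)
      finally show ?thesis .
    qed
    have "emeasure M (Bn n) = emeasure M (\<Union>k\<in>?I. Badk M Xi n k (c n))" using n by (simp add: Bn_def)
    also have "\<dots> \<le> (\<Sum>k\<in>?I. emeasure M (Badk M Xi n k (c n)))"
      by (rule emeasure_subadditive_finite) (auto intro!: Badk_meas)
    also have "\<dots> \<le> (\<Sum>k\<in>?I. ennreal X)" by (rule sum_mono) (rule bk)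
    also have "\<dots> = ennreal (real (card ?I) * X)" using X0 by (simp add: ennreal_mult ennreal_of_nat_eq_real_of_nat)
    finally have "measure M (Bn n) \<le> real (card ?I) * X"
      using X0 Bns[of n] by (simp add: emeasure_eq_measure)
    also have "real (card ?I) * X \<le> 2 ^ n * T * X"
    proof (rule mult_right_mono[OF _ X0])
      have "real (card ?I) = real (nat (floor (2 ^ n * T)))" by simp
      also have "\<dots> = real_of_int (floor (2 ^ n * T))" using T_pos by simp
      also have "\<dots> \<le> 2 ^ n * T" by (rule of_int_floor_le)
      finally show "real (card ?I) \<le> 2 ^ n * T" .
    qed
    also have "2 ^ n * T * X = 2 ^ n * T * 2 ^ n * (K / real (mm n) powr \<alpha>)" by (simp add: X_def)
    also have "\<dots> \<le> T * K * 2 powr \<alpha> / (real n)\<^sup>2"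
      by (rule count_bound[OF alpha_pos T_pos K0 _ _ _ mmc(2)]) (use b in \<open>simp_all add: c_def\<close>)
    finally show ?thesis by (simp add: divide_inverse)
  qed
  have summ: "summable (\<lambda>n. measure M (Bn n))"
  proof (rule summable_comparison_test'[where N=N1])
    show "summable (\<lambda>n. T * K * 2 powr \<alpha> * inverse (real n ^ 2))"
      by (rule summable_mult, rule inverse_power_summable) simp
    show "norm (measure M (Bn n)) \<le> T * K * 2 powr \<alpha> * inverse (real n ^ 2)" if "N1 \<le> n" for n
      using Bnm[OF that] by simp
  qed
  have BC: "AE \<omega> in M. eventually (\<lambda>n. \<omega> \<in> space M - Bn n) sequentially"
    by (rule borel_cantelli_AE1[OF Bns _ summ]) (simp add: emeasure_eq_measure)
  show ?thesis
    using BC good_AE AE_space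
  proof eventually_elim
    case (elim \<omega>)
    then obtain N2 where N2: "\<And>n. N2 \<le> n \<Longrightarrow> \<omega> \<notin> Bn n" by (auto simp: eventually_sequentially)
    show ?case unfolding eventually_sequentially
    proof (intro exI allI impI)
      fix n k assume n: "max N1 N2 \<le> n" and k: "1 \<le> k \<and> real k \<le> 2 ^ n * T"
      show "N_nk_less (Xi \<omega>) n k (4 powr (real n / \<alpha>) * real n powr (2 / \<alpha>))"
      proof (rule ccontr)
        assume nb: "\<not> N_nk_less (Xi \<omega>) n k (4 powr (real n / \<alpha>) * real n powr (2 / \<alpha>))"
        have "\<omega> \<in> Badk M Xi n k (c n)"
          by (rule Badk_contains[OF elim(3) elim(2)]) (use k nb in \<open>simp_all add: c_def\<close>)
        moreover have "k \<in> {1..nat (floor (2 ^ n * T))}"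
        proof -
          have "int k \<le> floor (2 ^ n * T)" using k by (simp add: le_floor_iff)
          then show ?thesis using k by (simp add: le_nat_iff)
        qed
        ultimately have "\<omega> \<in> Bn n" using n by (auto simp: Bn_def)
        then show False using N2[of n] n by simp
      qed
    qed
  qed
qed

end
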